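(* Let $l\in\frac12\mathbb N$, $\mathfrak g=\mathfrak g^{(l)}$, and let $U(\mathfrak g)^{(f)}$ be the localization of $U(\mathfrak g)$ at $\{f^i:i\ge0\}$. For every $x\in\mathbb C$ there is a unique algebra automorphism $\theta_x$ of $U(\mathfrak g)^{(f)}$ such that $\theta_x(f)=f$, $\theta_x(h)=h-2x$, $\theta_x(e)=e+x(h-1-x)f^{-1}$ and $$\theta_x(p_j)=\sum_{k=0}^{2l-j}(-1)^k\binom{x}{k}\frac{(2l-j)!}{(2l-j-k)!}f^{-k}p_{j+k},\qquad j=0,1,\dots,2l.$$
   Context: For $l\in\frac12\mathbb N$, $\mathfrak g^{(l)}$ is the complex Lie algebra with basis $e,h,f,p_0,\dots,p_{2l}$ and brackets $[h,e]=2e$, $[h,f]=-2f$, $[e,f]=h$, $[h,p_k]=2(l-k)p_k$, $[e,p_k]=kp_{k-1}$, $[f,p_k]=(2l-k)p_{k+1}$ ($p_{-1}=p_{2l+1}=0$), $[p_k,p_{k'}]=0$. Since $\mathrm{ad}\,f$ is locally nilpotent on $U(\mathfrak g)$, $\{f^i\}$ is an Ore set. For $x\in\mathbb C$, $\binom{x}{k}=\frac{x(x-1)\cdots(x-k+1)}{k!}$. *)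

theory Defs
  imports Complex_Main "HOL-Algebra.QuotRing"
begin

text \<open>Generators of the algebra: e, h, f, a formal inverse of f, and p_k.
  The parameter n stands for 2l (so l = n/2 ranges over one half of the naturals).\<close>

datatype gen = E | H | F | Finv | P nat

text \<open>Free associative complex algebra on the generators: finitely supported
  functions from words to coefficients, with concatenation-convolution product.\<close>

type_synonym fa = "gen list \<Rightarrow> complex"

definition fa_mult :: "fa \<Rightarrow> fa \<Rightarrow> fa" where
  "fa_mult a b = (\<lambda>w. \<Sum>i\<le>length w. a (take i w) * b (drop i w))"

definition fa_one :: fa where "fa_one = (\<lambda>w. if w = [] then 1 else 0)"

definition fadd :: "fa \<Rightarrow> fa \<Rightarrow> fa" where "fadd a b = (\<lambda>w. a w + b w)"

definition FA :: "fa ring" where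
  "FA = \<lparr>carrier = {a. finite {w. a w \<noteq> 0}}, mult = fa_mult, one = fa_one,
         zero = (\<lambda>w. 0), add = fadd\<rparr>"

definition fsc :: "complex \<Rightarrow> fa \<Rightarrow> fa" where "fsc c a = (\<lambda>w. c * a w)"

definition fsub :: "fa \<Rightarrow> fa \<Rightarrow> fa" where "fsub a b = fadd a (fsc (-1) b)"

definition fsum :: "(nat \<Rightarrow> fa) \<Rightarrow> nat set \<Rightarrow> fa" where
  "fsum t A = (\<lambda>w. \<Sum>k\<in>A. t k w)"

definition fpow :: "fa \<Rightarrow> nat \<Rightarrow> fa" where "fpow a k = ((fa_mult a) ^^ k) fa_one"

definition scal :: "complex \<Rightarrow> fa" where "scal c = fsc c fa_one"

definition gn :: "gen \<Rightarrow> fa" where "gn g = (\<lambda>w. if w = [g] then 1 else 0)"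

definition fcomm :: "fa \<Rightarrow> fa \<Rightarrow> fa" where "fcomm a b = fsub (fa_mult a b) (fa_mult b a)"

text \<open>Defining relations of U(g^(l)) with n = 2l, together with f * finv = finv * f = 1
  (adjoining an inverse of f), and p_k = 0 for k > 2l (only p_0..p_{2l} are generators).\<close>

definition rels :: "nat \<Rightarrow> fa set" where
  "rels n =
     {fsub (fcomm (gn H) (gn E)) (fsc 2 (gn E)),
      fadd (fcomm (gn H) (gn F)) (fsc 2 (gn F)),
      fsub (fcomm (gn E) (gn F)) (gn H),
      fsub (fa_mult (gn F) (gn Finv)) fa_one,
      fsub (fa_mult (gn Finv) (gn F)) fa_one}
   \<union> {fsub (fcomm (gn H) (gn (P k))) (fsc (of_nat n - 2 * of_nat k) (gn (P k))) | k. k \<le> n}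
   \<union> {fsub (fcomm (gn E) (gn (P k))) (fsc (of_nat k) (gn (P (k - 1)))) | k. k \<le> n}
   \<union> {fsub (fcomm (gn F) (gn (P k))) (fsc (of_nat (n - k)) (gn (P (k + 1)))) | k. k \<le> n}
   \<union> {fcomm (gn (P k)) (gn (P k')) | k k'. k \<le> n \<and> k' \<le> n}
   \<union> {gn (P k) | k. n < k}"

definition Jn :: "nat \<Rightarrow> fa set" where "Jn n = genideal FA (rels n)"

text \<open>The localization U(g)^(f), realised as the quotient of the free algebra by Jn.\<close>

definition Uf :: "nat \<Rightarrow> fa set ring" where "Uf n = FA Quot (Jn n)"

definition cls :: "nat \<Rightarrow> fa \<Rightarrow> fa set" where "cls n a = a_r_coset FA (Jn n) a"

definition alg_aut :: "nat \<Rightarrow> (fa set \<Rightarrow> fa set) \<Rightarrow> bool" where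
  "alg_aut n \<theta> \<longleftrightarrow> \<theta> \<in> ring_iso (Uf n) (Uf n) \<and> (\<forall>c. \<theta> (cls n (scal c)) = cls n (scal c))"

definition theta_prop :: "nat \<Rightarrow> complex \<Rightarrow> (fa set \<Rightarrow> fa set) \<Rightarrow> bool" where
  "theta_prop n x \<theta> \<longleftrightarrow>
     \<theta> (cls n (gn F)) = cls n (gn F) \<and>
     \<theta> (cls n (gn H)) = cls n (fsub (gn H) (scal (2 * x))) \<and>
     \<theta> (cls n (gn E)) = cls n (fadd (gn E)
        (fsc x (fa_mult (fsub (gn H) (scal (1 + x))) (gn Finv)))) \<and>
     (\<forall>j\<le>n. \<theta> (cls n (gn (P j))) = cls n
        (fsum (\<lambda>k. fsc ((-1) ^ k * (x gchoose k) * (fact (n - j) / fact (n - j - k)))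
                      (fa_mult (fpow (gn Finv) k) (gn (P (j + k))))) {0..n - j}))"

end

theory Submission
  imports Defs "HOL-Computational_Algebra.Polynomial"
begin

abbreviation fin :: "fa \<Rightarrow> bool" where "fin a \<equiv> finite {w. a w \<noteq> 0}"

lemma fa_mult_Nil: "fa_mult a b [] = a [] * b []"
  by (simp add: fa_mult_def)

lemma fa_mult_Cons: "fa_mult a b (x # w) = a [] * b (x # w) + fa_mult (\<lambda>u. a (x # u)) b w"
  unfolding fa_mult_def by (simp add: sum.atMost_Suc_shift del: sum.atMost_Suc)

lemma fa_mult_ldistr: "fa_mult (\<lambda>u. k * p u + r u) c w = k * fa_mult p c w + fa_mult r c w"
  unfolding fa_mult_def by (simp add: sum.distrib sum_distrib_left algebra_simps)

lemma fa_mult_rdistr: "fa_mult c (\<lambda>u. k * p u + r u) w = k * fa_mult c p w + fa_mult c r w"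
  unfolding fa_mult_def by (simp add: sum.distrib sum_distrib_left algebra_simps)

lemma fa_mult_assoc: "fa_mult (fa_mult a b) c w = fa_mult a (fa_mult b c) w"
proof (induction w arbitrary: a b c)
  case Nil then show ?case by (simp add: fa_mult_Nil)
next
  case (Cons x w)
  have sh: "(\<lambda>u. fa_mult a b (x # u)) = (\<lambda>u. a [] * b (x # u) + fa_mult (\<lambda>u. a (x # u)) b u)"
    by (simp add: fa_mult_Cons)
  show ?case
    by (simp add: fa_mult_Cons sh fa_mult_ldistr Cons.IH fa_mult_Nil algebra_simps)
qed

lemma fa_mult_zero_left: "fa_mult (\<lambda>u. 0) b w = 0"
  by (simp add: fa_mult_def)

lemma fa_mult_zero_right: "fa_mult b (\<lambda>u. 0) w = 0"
  by (simp add: fa_mult_def)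

lemma fa_one_left: "fa_mult fa_one a w = a w"
proof (cases w)
  case Nil then show ?thesis by (simp add: fa_mult_Nil fa_one_def)
next
  case (Cons x w')
  have "(\<lambda>u. fa_one (x # u)) = (\<lambda>u. 0)" by (simp add: fa_one_def)
  then show ?thesis using Cons by (simp add: fa_mult_Cons fa_mult_zero_left fa_one_def)
qed

lemma fa_one_right: "fa_mult a fa_one w = a w"
proof (induction w arbitrary: a)
  case Nil then show ?case by (simp add: fa_mult_Nil fa_one_def)
next
  case (Cons x w)
  then show ?case by (simp add: fa_mult_Cons fa_one_def)
qed

lemma fa_mult_nonzero:
  assumes "fa_mult a b w \<noteq> 0"
  shows "\<exists>u v. w = u @ v \<and> a u \<noteq> 0 \<and> b v \<noteq> 0"
proof -
  from assms obtain i where "a (take i w) * b (drop i w) \<noteq> 0"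
    unfolding fa_mult_def by (meson sum.neutral)
  then show ?thesis by (intro exI[of _ "take i w"] exI[of _ "drop i w"]) auto
qed

lemma fin_mult: assumes "fin a" "fin b" shows "fin (fa_mult a b)"
proof -
  have "{w. fa_mult a b w \<noteq> 0} \<subseteq> (\<lambda>(u,v). u @ v) ` ({w. a w \<noteq> 0} \<times> {w. b w \<noteq> 0})"
    using fa_mult_nonzero by fastforce
  then show ?thesis using assms by (meson finite_SigmaI finite_imageI finite_subset)
qed

lemma fin_add: assumes "fin a" "fin b" shows "fin (\<lambda>w. a w + b w)"
proof -
  have "{w. a w + b w \<noteq> 0} \<subseteq> {w. a w \<noteq> 0} \<union> {w. b w \<noteq> 0}" by auto
  then show ?thesis using assms by (meson finite_UnI finite_subset)
qed

lemma fin_sc: assumes "fin a" shows "fin (\<lambda>w. c * a w)"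
  by (rule finite_subset[OF _ assms]) auto

lemma fin_one: "fin fa_one"
proof -
  have "{w. fa_one w \<noteq> 0} \<subseteq> {[]}" by (auto simp: fa_one_def split: if_splits)
  then show ?thesis by (rule finite_subset) simp
qed

lemma fin_gn: "fin (gn g)"
proof -
  have "{w. gn g w \<noteq> 0} \<subseteq> {[g]}" by (auto simp: gn_def split: if_splits)
  then show ?thesis by (rule finite_subset) simp
qed

lemma fin_zero: "fin (\<lambda>w. 0)" by simp

lemma fin_fadd: "fin a \<Longrightarrow> fin b \<Longrightarrow> fin (fadd a b)" by (simp add: fadd_def fin_add)
lemma fin_fsc: "fin a \<Longrightarrow> fin (fsc c a)" by (simp add: fsc_def fin_sc)
lemma fin_fsub: "fin a \<Longrightarrow> fin b \<Longrightarrow> fin (fsub a b)" by (simp add: fsub_def fin_fadd fin_fsc)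
lemma fin_fcomm: "fin a \<Longrightarrow> fin b \<Longrightarrow> fin (fcomm a b)" by (simp add: fcomm_def fin_fsub fin_mult)
lemma fin_scal: "fin (scal c)" by (simp add: scal_def fin_fsc fin_one)
lemma fin_fpow: "fin a \<Longrightarrow> fin (fpow a k)"
  by (induction k) (simp_all add: fpow_def fin_one fin_mult)
lemma fin_fsum: "finite A \<Longrightarrow> (\<And>k. k \<in> A \<Longrightarrow> fin (T k)) \<Longrightarrow> fin (fsum T A)"
proof (induction A rule: finite_induct)
  case empty then show ?case by (simp add: fsum_def)
next
  case (insert x F)
  have "fsum T (insert x F) = (\<lambda>w. T x w + fsum T F w)"
    using insert by (simp add: fsum_def)
  then show ?case using insert by (simp add: fin_add)
qed

lemmas fin_intros = fin_fadd fin_fsc fin_fsub fin_fcomm fin_scal fin_fpow fin_fsum fin_gn fin_one fin_mult fin_zero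

typedef fw = "{a::fa. fin a}" by (rule exI[of _ "\<lambda>w. 0"]) simp

lemma fin_Rep: "fin (Rep_fw a)" using Rep_fw by simp

instantiation fw :: ring_1
begin
definition "0 = Abs_fw (\<lambda>w. 0)"
definition "1 = Abs_fw fa_one"
definition "a + b = Abs_fw (\<lambda>w. Rep_fw a w + Rep_fw b w)"
definition "- a = Abs_fw (\<lambda>w. - Rep_fw a w)"
definition "a - b = Abs_fw (\<lambda>w. Rep_fw a w - Rep_fw b w)"
definition "a * b = Abs_fw (fa_mult (Rep_fw a) (Rep_fw b))"

lemma Rep_zero: "Rep_fw 0 = (\<lambda>w. 0)"
  by (simp add: zero_fw_def Abs_fw_inverse)
lemma Rep_one: "Rep_fw 1 = fa_one"
  by (simp add: one_fw_def Abs_fw_inverse fin_one)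
lemma Rep_plus: "Rep_fw (a + b) = (\<lambda>w. Rep_fw a w + Rep_fw b w)"
  by (simp add: plus_fw_def Abs_fw_inverse fin_add fin_Rep)
lemma Rep_uminus: "Rep_fw (- a) = (\<lambda>w. - Rep_fw a w)"
proof -
  have "fin (\<lambda>w. - Rep_fw a w)" using fin_sc[OF fin_Rep, of "-1" a] by simp
  then show ?thesis by (simp add: uminus_fw_def Abs_fw_inverse)
qed
lemma Rep_minus: "Rep_fw (a - b) = (\<lambda>w. Rep_fw a w - Rep_fw b w)"
proof -
  have "fin (\<lambda>w. Rep_fw a w + (-1) * Rep_fw b w)" by (intro fin_add fin_sc fin_Rep)
  then show ?thesis by (simp add: minus_fw_def Abs_fw_inverse)
qed
lemma Rep_times: "Rep_fw (a * b) = fa_mult (Rep_fw a) (Rep_fw b)"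
  by (simp add: times_fw_def Abs_fw_inverse fin_mult fin_Rep)

lemma fw_eqI: "(\<And>w. Rep_fw a w = Rep_fw b w) \<Longrightarrow> a = b"
  by (metis Rep_fw_inject ext)

instance
proof
  fix a b c :: fw
  show "a * b * c = a * (b * c)"
    by (rule fw_eqI) (simp add: Rep_times fa_mult_assoc)
  show "1 * a = a" by (rule fw_eqI) (simp add: Rep_times Rep_one fa_one_left)
  show "a * 1 = a" by (rule fw_eqI) (simp add: Rep_times Rep_one fa_one_right)
  show "a + b + c = a + (b + c)" by (rule fw_eqI) (simp add: Rep_plus)
  show "a + b = b + a" by (rule fw_eqI) (simp add: Rep_plus)
  show "0 + a = a" by (rule fw_eqI) (simp add: Rep_plus Rep_zero)
  show "- a + a = 0" by (rule fw_eqI) (simp add: Rep_plus Rep_zero Rep_uminus)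
  show "a - b = a + - b" by (rule fw_eqI) (simp add: Rep_plus Rep_minus Rep_uminus)
  show "(a + b) * c = a * c + b * c"
    using fa_mult_ldistr[of 1 "Rep_fw a" "Rep_fw b"]
    by (intro fw_eqI) (simp add: Rep_plus Rep_times)
  show "a * (b + c) = a * b + a * c"
    using fa_mult_rdistr[of "Rep_fw a" 1 "Rep_fw b"]
    by (intro fw_eqI) (simp add: Rep_plus Rep_times)
  show "(0::fw) \<noteq> 1"
  proof
    assume "(0::fw) = 1"
    then have "Rep_fw (0::fw) [] = Rep_fw 1 []" by simp
    then show False by (simp add: Rep_zero Rep_one fa_one_def)
  qed
qed
end

lemma Rep_sum: "Rep_fw (sum f A) w = (\<Sum>i\<in>A. Rep_fw (f i) w)"
  by (induction A rule: infinite_finite_induct) (simp_all add: Rep_zero Rep_plus)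

definition sc :: "complex \<Rightarrow> fw" where "sc c = Abs_fw (scal c)"

lemma Rep_sc: "Rep_fw (sc c) = (\<lambda>w. if w = [] then c else 0)"
  by (simp add: sc_def Abs_fw_inverse fin_scal) (auto simp: scal_def fsc_def fa_one_def)

lemma fa_mult_scal_left: "fa_mult (\<lambda>w. if w = [] then c else 0) a u = c * a u"
proof -
  have "(\<lambda>w. if w = [] then c else 0) = (\<lambda>w. c * fa_one w + 0 * fa_one w)"
    by (auto simp: fa_one_def)
  then show ?thesis using fa_mult_ldistr[of c fa_one "\<lambda>w. 0 * fa_one w" a u]
    by (simp add: fa_one_left fa_mult_zero_left)
qed

lemma fa_mult_scal_right: "fa_mult a (\<lambda>w. if w = [] then c else 0) u = c * a u"
proof -
  have "(\<lambda>w. if w = [] then c else 0) = (\<lambda>w. c * fa_one w + 0 * fa_one w)"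
    by (auto simp: fa_one_def)
  then show ?thesis using fa_mult_rdistr[of a c fa_one "\<lambda>w. 0 * fa_one w" u]
    by (simp add: fa_one_right fa_mult_zero_right)
qed

lemma Rep_sc_mult: "Rep_fw (sc c * a) w = c * Rep_fw a w"
  by (simp add: Rep_times Rep_sc fa_mult_scal_left)

lemma Rep_mult_sc: "Rep_fw (a * sc c) w = c * Rep_fw a w"
  by (simp add: Rep_times Rep_sc fa_mult_scal_right)

lemma sc_comm: "a * sc c = sc c * a"
  by (rule fw_eqI) (simp add: Rep_sc_mult Rep_mult_sc)

lemma sc_add[simp]: "sc (c + d) = sc c + sc d"
  by (rule fw_eqI) (simp add: Rep_plus Rep_sc)
lemma sc_mult[simp]: "sc (c * d) = sc c * sc d"
  by (rule fw_eqI) (simp add: Rep_sc_mult Rep_sc)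
lemma sc_one[simp]: "sc 1 = 1"
  by (rule fw_eqI) (simp add: Rep_one Rep_sc fa_one_def)
lemma sc_zero[simp]: "sc 0 = 0"
  by (rule fw_eqI) (simp add: Rep_zero Rep_sc)
lemma sc_uminus[simp]: "sc (- c) = - sc c"
  by (rule fw_eqI) (simp add: Rep_uminus Rep_sc)
lemma sc_diff[simp]: "sc (c - d) = sc c - sc d"
  by (rule fw_eqI) (simp add: Rep_minus Rep_sc)
lemma sc_of_nat[simp]: "sc (of_nat k) = of_nat k"
  by (induction k) simp_all
lemma sc_numeral[simp]: "sc (numeral k) = numeral k"
  using sc_of_nat[of "numeral k"] by simp
lemma sc_power[simp]: "sc (c ^ k) = sc c ^ k"
  by (induction k) simp_all
lemma sc_sum[simp]: "sc (sum f A) = (\<Sum>i\<in>A. sc (f i))"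
  by (induction A rule: infinite_finite_induct) simp_all

lemma sc_comm': "a * (sc c * b) = sc c * (a * b)"
  by (metis mult.assoc sc_comm)

lemma neg_sc: "- a = sc (-1) * a"
  by simp

definition gnw :: "gen \<Rightarrow> fw" where "gnw g = Abs_fw (gn g)"
definition dl :: "gen list \<Rightarrow> fw" where "dl w = prod_list (map gnw w)"

lemma Rep_gnw: "Rep_fw (gnw g) = gn g"
  by (simp add: gnw_def Abs_fw_inverse fin_gn)

lemma fa_mult_gn: "fa_mult (gn g) b u = (case u of [] \<Rightarrow> 0 | x # u' \<Rightarrow> if x = g then b u' else 0)"
proof (cases u)
  case Nil then show ?thesis by (simp add: fa_mult_Nil gn_def)
next
  case (Cons x u')
  have "(\<lambda>v. gn g (x # v)) = (\<lambda>v. if v = [] then (if x = g then 1 else 0) else 0)"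
    by (auto simp: gn_def)
  then show ?thesis using Cons by (simp add: fa_mult_Cons gn_def fa_mult_scal_left)
qed

lemma Rep_dl: "Rep_fw (dl w) = (\<lambda>u. if u = w then 1 else 0)"
proof (induction w)
  case Nil then show ?case by (simp add: dl_def Rep_one fa_one_def)
next
  case (Cons g w)
  have "dl (g # w) = gnw g * dl w" by (simp add: dl_def)
  then show ?case using Cons
    by (auto simp: Rep_times Rep_gnw fa_mult_gn split: list.splits)
qed

lemma dl_append: "dl (u @ v) = dl u * dl v"
  by (simp add: dl_def)

lemma dl_Nil: "dl [] = 1" by (simp add: dl_def)
lemma dl_Cons: "dl (g # w) = gnw g * dl w" by (simp add: dl_def)

abbreviation supp :: "fw \<Rightarrow> gen list set" where "supp a \<equiv> {w. Rep_fw a w \<noteq> 0}"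

lemma finite_supp: "finite (supp a)" using fin_Rep by simp

lemma expand_gen:
  assumes "finite S" "supp a \<subseteq> S"
  shows "a = (\<Sum>w\<in>S. sc (Rep_fw a w) * dl w)"
proof (rule fw_eqI)
  fix u
  have "Rep_fw (\<Sum>w\<in>S. sc (Rep_fw a w) * dl w) u = (\<Sum>w\<in>S. (if u = w then Rep_fw a w else 0))"
    by (simp add: Rep_sum Rep_sc_mult Rep_dl if_distrib cong: if_cong)
  also have "\<dots> = (if u \<in> S then Rep_fw a u else 0)"
    using assms(1) by (simp add: sum.delta)
  also have "\<dots> = Rep_fw a u" using assms(2) by auto
  finally show "Rep_fw a u = Rep_fw (\<Sum>w\<in>S. sc (Rep_fw a w) * dl w) u" by simp
qed

lemma expand: "a = (\<Sum>w\<in>supp a. sc (Rep_fw a w) * dl w)"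
  by (rule expand_gen[OF finite_supp]) simp

definition monw :: "(gen \<Rightarrow> fw) \<Rightarrow> gen list \<Rightarrow> fw" where "monw t w = prod_list (map t w)"

definition subst :: "(gen \<Rightarrow> fw) \<Rightarrow> fw \<Rightarrow> fw" where
  "subst t a = (\<Sum>w\<in>supp a. sc (Rep_fw a w) * monw t w)"

lemma subst_gen:
  assumes "finite S" "supp a \<subseteq> S"
  shows "subst t a = (\<Sum>w\<in>S. sc (Rep_fw a w) * monw t w)"
  unfolding subst_def
  by (rule sum.mono_neutral_left[OF assms(1) assms(2)]) auto

lemma subst_add: "subst t (a + b) = subst t a + subst t b"
proof -
  let ?S = "supp a \<union> supp b"
  have f: "finite ?S" by (simp add: finite_supp)
  have s: "supp (a + b) \<subseteq> ?S" by (auto simp: Rep_plus)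
  have a: "subst t a = (\<Sum>w\<in>?S. sc (Rep_fw a w) * monw t w)" by (rule subst_gen[OF f]) auto
  have b: "subst t b = (\<Sum>w\<in>?S. sc (Rep_fw b w) * monw t w)" by (rule subst_gen[OF f]) auto
  show ?thesis
    unfolding subst_gen[OF f s] a b
    by (auto simp: Rep_plus sum.distrib distrib_right)
qed

lemma subst_sc: "subst t (sc c * a) = sc c * subst t a"
proof -
  have s: "supp (sc c * a) \<subseteq> supp a" by (auto simp: Rep_sc_mult)
  have "subst t (sc c * a) = (\<Sum>w\<in>supp a. sc (Rep_fw (sc c * a) w) * monw t w)"
    by (rule subst_gen[OF finite_supp s])
  then show ?thesis
    by (simp add: Rep_sc_mult sum_distrib_left mult.assoc subst_def)
qed

lemma subst_zero: "subst t 0 = 0"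
  by (simp add: subst_def Rep_zero)

lemma subst_uminus: "subst t (- a) = - subst t a"
proof -
  have "subst t (- a) = subst t (sc (-1) * a)" by (simp only: neg_sc)
  also have "\<dots> = sc (-1) * subst t a" by (rule subst_sc)
  finally show ?thesis by (simp only: neg_sc[symmetric])
qed

lemma subst_diff: "subst t (a - b) = subst t a - subst t b"
  by (simp only: diff_conv_add_uminus subst_add subst_uminus)

lemma subst_sum: "subst t (sum f A) = (\<Sum>i\<in>A. subst t (f i))"
  by (induction A rule: infinite_finite_induct) (simp_all add: subst_zero subst_add)

lemma subst_dl: "subst t (dl w) = monw t w"
proof -
  have s: "supp (dl w) \<subseteq> {w}" by (auto simp: Rep_dl split: if_splits)
  have "subst t (dl w) = (\<Sum>u\<in>{w}. sc (Rep_fw (dl w) u) * monw t u)"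
    by (rule subst_gen[OF _ s]) simp
  then show ?thesis by (simp add: Rep_dl)
qed

lemma monw_append: "monw t (u @ v) = monw t u * monw t v"
  by (simp add: monw_def)

lemma sc_mult_mult: "(sc c * x) * (sc d * y) = sc (c * d) * (x * y)"
proof -
  have "(sc c * x) * (sc d * y) = sc c * ((x * sc d) * y)" by (simp only: mult.assoc)
  also have "\<dots> = sc c * (sc d * x * y)" by (simp only: sc_comm)
  finally show ?thesis by (simp only: mult.assoc sc_mult)
qed

lemma sc_dl_mult: "(sc c * dl u) * (sc d * dl v) = sc (c * d) * dl (u @ v)"
  by (simp only: sc_mult_mult dl_append)

lemma mult_expand:
  "a * b = (\<Sum>u\<in>supp a. \<Sum>v\<in>supp b. sc (Rep_fw a u * Rep_fw b v) * dl (u @ v))"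
proof -
  have "a * b = (\<Sum>u\<in>supp a. sc (Rep_fw a u) * dl u) * (\<Sum>v\<in>supp b. sc (Rep_fw b v) * dl v)"
    using expand[of a] expand[of b] by simp
  also have "\<dots> = (\<Sum>u\<in>supp a. \<Sum>v\<in>supp b. sc (Rep_fw a u) * dl u * (sc (Rep_fw b v) * dl v))"
    by (simp add: sum_product)
  finally show ?thesis by (simp only: sc_dl_mult)
qed

lemma subst_mult: "subst t (a * b) = subst t a * subst t b"
proof -
  have "subst t (a * b) = (\<Sum>u\<in>supp a. \<Sum>v\<in>supp b. sc (Rep_fw a u * Rep_fw b v) * monw t (u @ v))"
    by (subst mult_expand) (simp add: subst_sum subst_sc subst_dl del: sc_mult)
  also have "\<dots> = (\<Sum>u\<in>supp a. \<Sum>v\<in>supp b. sc (Rep_fw a u) * monw t u * (sc (Rep_fw b v) * monw t v))"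
    by (simp only: monw_append sc_mult_mult)
  also have "\<dots> = subst t a * subst t b"
    by (simp add: subst_def sum_product)
  finally show ?thesis .
qed

lemma subst_one: "subst t 1 = 1"
  using subst_dl[of t "[]"] by (simp add: dl_Nil monw_def)

lemma subst_sc1: "subst t (sc c) = sc c"
  using subst_sc[of t c 1] by (simp add: subst_one)

lemma subst_gnw: "subst t (gnw g) = t g"
  using subst_dl[of t "[g]"] by (simp add: dl_def monw_def)

lemma subst_id: "subst gnw a = a"
proof -
  have "monw gnw = dl" by (simp add: monw_def dl_def fun_eq_iff)
  then show ?thesis by (metis expand subst_def)
qed

lemma subst_power: "subst t (a ^ k) = subst t a ^ k"
  by (induction k) (simp_all add: subst_one subst_mult)

lemma FA_simps: "carrier FA = {a. fin a}" "monoid.mult FA = fa_mult" "monoid.one FA = fa_one"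
  "ring.zero FA = (\<lambda>w. 0)" "ring.add FA = fadd"
  by (simp_all add: FA_def)

lemma ring_FA: "ring FA"
proof (rule ringI)
  show "abelian_group FA"
  proof (rule abelian_groupI, simp_all add: FA_simps)
    fix x y z :: fa
    show "fin x \<Longrightarrow> fin y \<Longrightarrow> fin (fadd x y)" by (rule fin_fadd)
    show "fadd (fadd x y) z = fadd x (fadd y z)" by (simp add: fadd_def add.assoc)
    show "fadd x y = fadd y x" by (simp add: fadd_def add.commute)
    show "fadd (\<lambda>w. 0) x = x" by (simp add: fadd_def)
    assume "fin x"
    then have "fin (\<lambda>w. (-1) * x w)" by (rule fin_sc)
    then show "\<exists>y. fin y \<and> fadd y x = (\<lambda>w. 0)"
      by (intro exI[of _ "\<lambda>w. (-1) * x w"]) (simp add: fadd_def)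
  qed
  show "monoid FA"
    by (rule monoidI) (simp_all add: FA_simps fin_mult fin_one fun_eq_iff fa_mult_assoc fa_one_left fa_one_right)
next
  fix x y z assume "x \<in> carrier FA" "y \<in> carrier FA" "z \<in> carrier FA"
  show "(x \<oplus>\<^bsub>FA\<^esub> y) \<otimes>\<^bsub>FA\<^esub> z = x \<otimes>\<^bsub>FA\<^esub> z \<oplus>\<^bsub>FA\<^esub> y \<otimes>\<^bsub>FA\<^esub> z"
    using fa_mult_ldistr[of 1 x y z] by (simp add: FA_simps fadd_def fun_eq_iff)
  show "z \<otimes>\<^bsub>FA\<^esub> (x \<oplus>\<^bsub>FA\<^esub> y) = z \<otimes>\<^bsub>FA\<^esub> x \<oplus>\<^bsub>FA\<^esub> z \<otimes>\<^bsub>FA\<^esub> y"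
    using fa_mult_rdistr[of z 1 x y] by (simp add: FA_simps fadd_def fun_eq_iff)
qed

interpretation FA: ring FA by (rule ring_FA)

lemma FA_a_inv: "fin x \<Longrightarrow> \<ominus>\<^bsub>FA\<^esub> x = (\<lambda>w. - x w)"
  apply (rule FA.minus_equality)
  using fin_sc[of x "-1"] by (simp_all add: FA_simps fadd_def)

lemma rels_carrier: "rels n \<subseteq> carrier FA"
  unfolding rels_def FA_simps by (auto intro!: fin_intros)

lemma ideal_J: "ideal (Jn n) FA"
  unfolding Jn_def by (rule FA.genideal_ideal[OF rels_carrier])

lemma rels_J: "rels n \<subseteq> Jn n"
  unfolding Jn_def by (rule FA.genideal_self[OF rels_carrier])

definition Jw :: "nat \<Rightarrow> fw set" where "Jw n = {a. Rep_fw a \<in> Jn n}"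

lemma Rep_carrier: "Rep_fw a \<in> carrier FA"
  by (simp add: FA_simps fin_Rep)

lemma Jw_add: "a \<in> Jw n \<Longrightarrow> b \<in> Jw n \<Longrightarrow> a + b \<in> Jw n"
proof -
  assume a: "a \<in> Jw n" and b: "b \<in> Jw n"
  interpret ideal "Jn n" FA by (rule ideal_J)
  have "Rep_fw a \<oplus>\<^bsub>FA\<^esub> Rep_fw b \<in> Jn n" using a b by (simp add: Jw_def a_closed)
  then show ?thesis by (simp add: Jw_def Rep_plus FA_simps fadd_def)
qed

lemma Jw_lmult: "a \<in> Jw n \<Longrightarrow> b * a \<in> Jw n"
proof -
  assume a: "a \<in> Jw n"
  interpret ideal "Jn n" FA by (rule ideal_J)
  have "Rep_fw b \<otimes>\<^bsub>FA\<^esub> Rep_fw a \<in> Jn n" using a Rep_carrier by (simp add: Jw_def I_l_closed)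
  then show ?thesis by (simp add: Jw_def Rep_times FA_simps)
qed

lemma Jw_rmult: "a \<in> Jw n \<Longrightarrow> a * b \<in> Jw n"
proof -
  assume a: "a \<in> Jw n"
  interpret ideal "Jn n" FA by (rule ideal_J)
  have "Rep_fw a \<otimes>\<^bsub>FA\<^esub> Rep_fw b \<in> Jn n" using a Rep_carrier by (simp add: Jw_def I_r_closed)
  then show ?thesis by (simp add: Jw_def Rep_times FA_simps)
qed

lemma Jw_zero: "0 \<in> Jw n"
proof -
  interpret ideal "Jn n" FA by (rule ideal_J)
  show ?thesis using zero_closed by (simp add: Jw_def Rep_zero FA_simps)
qed

lemma Jw_uminus: "a \<in> Jw n \<Longrightarrow> - a \<in> Jw n"
  by (simp only: neg_sc Jw_lmult)

lemma Jw_diff: "a \<in> Jw n \<Longrightarrow> b \<in> Jw n \<Longrightarrow> a - b \<in> Jw n"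
  by (simp only: diff_conv_add_uminus Jw_add Jw_uminus)

lemma Jw_sum: "(\<And>i. i \<in> A \<Longrightarrow> f i \<in> Jw n) \<Longrightarrow> sum f A \<in> Jw n"
  by (induction A rule: infinite_finite_induct) (simp_all add: Jw_zero Jw_add)

lemma Abs_Rep_carrier: "fin r \<Longrightarrow> Rep_fw (Abs_fw r) = r"
  by (simp add: Abs_fw_inverse)

lemma rels_Jw: "r \<in> rels n \<Longrightarrow> Abs_fw r \<in> Jw n"
proof -
  assume r: "r \<in> rels n"
  then have "fin r" using rels_carrier by (auto simp: FA_simps)
  then show ?thesis using r rels_J by (auto simp: Jw_def Abs_fw_inverse)
qed

definition q :: "nat \<Rightarrow> fw \<Rightarrow> fa set" where "q n a = cls n (Rep_fw a)"

lemma cls_hom: "cls n \<in> ring_hom FA (Uf n)"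
proof -
  interpret ideal "Jn n" FA by (rule ideal_J)
  have "cls n = (+>\<^bsub>FA\<^esub>) (Jn n)" by (simp add: cls_def fun_eq_iff)
  then show ?thesis using rcos_ring_hom by (simp add: Uf_def)
qed

lemma ring_U: "ring (Uf n)"
proof -
  interpret ideal "Jn n" FA by (rule ideal_J)
  show ?thesis unfolding Uf_def by (rule quotient_is_ring)
qed

lemma q_add: "q n (a + b) = q n a \<oplus>\<^bsub>Uf n\<^esub> q n b"
  using ring_hom_add[OF cls_hom Rep_carrier Rep_carrier]
  by (simp add: q_def Rep_plus FA_simps fadd_def)

lemma q_mult: "q n (a * b) = q n a \<otimes>\<^bsub>Uf n\<^esub> q n b"
  using ring_hom_mult[OF cls_hom Rep_carrier Rep_carrier]
  by (simp add: q_def Rep_times FA_simps)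

lemma q_one: "q n 1 = \<one>\<^bsub>Uf n\<^esub>"
  using ring_hom_one[OF cls_hom] by (simp add: q_def Rep_one FA_simps)

lemma q_carrier: "q n a \<in> carrier (Uf n)"
  using ring_hom_closed[OF cls_hom Rep_carrier] by (simp add: q_def)

lemma q_zero: "q n 0 = \<zero>\<^bsub>Uf n\<^esub>"
  using ring_hom_zero[OF cls_hom ring_FA ring_U] by (simp add: q_def Rep_zero FA_simps)

lemma q_surj: "X \<in> carrier (Uf n) \<Longrightarrow> \<exists>a. X = q n a"
proof -
  assume "X \<in> carrier (Uf n)"
  moreover have "carrier (Uf n) = a_rcosets\<^bsub>FA\<^esub> (Jn n)"
    by (simp add: Uf_def FactRing_def)
  ultimately have "X \<in> (\<Union>a\<in>carrier FA. {Jn n +>\<^bsub>FA\<^esub> a})"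
    by (simp add: A_RCOSETS_def')
  then obtain r where r: "r \<in> carrier FA" "X = cls n r"
    by (auto simp: cls_def)
  then have "X = q n (Abs_fw r)" by (simp add: q_def Abs_fw_inverse FA_simps)
  then show ?thesis ..
qed

lemma q_eq: "q n a = q n b \<longleftrightarrow> a - b \<in> Jw n"
proof -
  interpret ideal "Jn n" FA by (rule ideal_J)
  have ai: "\<ominus>\<^bsub>FA\<^esub> Rep_fw b = (\<lambda>w. - Rep_fw b w)" by (rule FA_a_inv[OF fin_Rep])
  have m: "Rep_fw a \<ominus>\<^bsub>FA\<^esub> Rep_fw b = Rep_fw (a - b)"
    unfolding a_minus_def ai by (simp add: Rep_minus FA_simps fadd_def)
  have "q n a = q n b \<longleftrightarrow> Rep_fw a \<in> Jn n +>\<^bsub>FA\<^esub> Rep_fw b"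
  proof
    assume "q n a = q n b"
    then have "Jn n +>\<^bsub>FA\<^esub> Rep_fw a = Jn n +>\<^bsub>FA\<^esub> Rep_fw b" by (simp only: q_def cls_def)
    then show "Rep_fw a \<in> Jn n +>\<^bsub>FA\<^esub> Rep_fw b"
      using a_rcos_self[OF Rep_carrier, of a] by simp
  next
    assume "Rep_fw a \<in> Jn n +>\<^bsub>FA\<^esub> Rep_fw b"
    then have "Jn n +>\<^bsub>FA\<^esub> Rep_fw b = Jn n +>\<^bsub>FA\<^esub> Rep_fw a"
      by (rule a_repr_independence'[OF _ Rep_carrier])
    then show "q n a = q n b" by (simp only: q_def cls_def)
  qed
  also have "\<dots> \<longleftrightarrow> Rep_fw a \<ominus>\<^bsub>FA\<^esub> Rep_fw b \<in> Jn n"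
    by (rule a_rcos_module_minus[OF ring_FA Rep_carrier Rep_carrier])
  also have "\<dots> \<longleftrightarrow> a - b \<in> Jw n" by (simp only: m Jw_def mem_Collect_eq)
  finally show ?thesis .
qed

definition cg :: "nat \<Rightarrow> fw \<Rightarrow> fw \<Rightarrow> bool" where "cg n a b \<longleftrightarrow> a - b \<in> Jw n"

lemma q_eq_cg: "q n a = q n b \<longleftrightarrow> cg n a b" by (simp add: cg_def q_eq)

lemma cg_refl[simp]: "cg n a a" by (simp add: cg_def Jw_zero)
lemma cg_eq: "a = b \<Longrightarrow> cg n a b" by simp
lemma cg_sym: "cg n a b \<Longrightarrow> cg n b a"
proof -
  assume "cg n a b"
  then have "- (a - b) \<in> Jw n" unfolding cg_def by (rule Jw_uminus)
  then show ?thesis by (simp add: cg_def)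
qed
lemma cg_trans[trans]: "cg n a b \<Longrightarrow> cg n b c \<Longrightarrow> cg n a c"
proof -
  assume "cg n a b" "cg n b c"
  then have "(a - b) + (b - c) \<in> Jw n" unfolding cg_def by (rule Jw_add)
  then show ?thesis by (simp add: cg_def)
qed
lemma cg_add: "cg n a a' \<Longrightarrow> cg n b b' \<Longrightarrow> cg n (a + b) (a' + b')"
proof -
  assume "cg n a a'" "cg n b b'"
  then have "(a - a') + (b - b') \<in> Jw n" unfolding cg_def by (rule Jw_add)
  moreover have "(a - a') + (b - b') = (a + b) - (a' + b')" by simp
  ultimately show ?thesis by (simp add: cg_def)
qed
lemma cg_uminus: "cg n a a' \<Longrightarrow> cg n (- a) (- a')"
proof -
  assume "cg n a a'"
  then have "- (a - a') \<in> Jw n" unfolding cg_def by (rule Jw_uminus)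
  then show ?thesis by (simp add: cg_def)
qed
lemma cg_diff: "cg n a a' \<Longrightarrow> cg n b b' \<Longrightarrow> cg n (a - b) (a' - b')"
  unfolding diff_conv_add_uminus by (intro cg_add cg_uminus)
lemma cg_mult: "cg n a a' \<Longrightarrow> cg n b b' \<Longrightarrow> cg n (a * b) (a' * b')"
proof -
  assume "cg n a a'" "cg n b b'"
  then have "(a - a') * b + a' * (b - b') \<in> Jw n"
    unfolding cg_def by (intro Jw_add Jw_lmult Jw_rmult)
  moreover have "(a - a') * b + a' * (b - b') = a * b - a' * b'"
    by (simp add: algebra_simps)
  ultimately show ?thesis by (simp add: cg_def)
qed
lemma cg_lmult: "cg n b b' \<Longrightarrow> cg n (a * b) (a * b')" by (rule cg_mult[OF cg_refl])
lemma cg_rmult: "cg n a a' \<Longrightarrow> cg n (a * b) (a' * b)" by (rule cg_mult[OF _ cg_refl])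
lemma cg_sum: "(\<And>i. i \<in> A \<Longrightarrow> cg n (f i) (g i)) \<Longrightarrow> cg n (sum f A) (sum g A)"
proof (induction A rule: infinite_finite_induct)
  case (insert x F)
  have "cg n (f x + sum f F) (g x + sum g F)"
    by (intro cg_add insert.prems insert.IH) auto
  then show ?case by (simp only: sum.insert[OF insert.hyps])
qed simp_all
lemma cg_Jw: "a \<in> Jw n \<Longrightarrow> cg n a 0" by (simp add: cg_def)
lemma cg_zero_iff: "cg n a 0 \<longleftrightarrow> a \<in> Jw n" by (simp add: cg_def)
lemma cg_power: "cg n a b \<Longrightarrow> cg n (a ^ k) (b ^ k)"
  by (induction k) (simp_all only: power_0 power_Suc cg_refl cg_mult)

lemma Abs_eqI: "Rep_fw X = r \<Longrightarrow> Abs_fw r = X"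
  using Rep_fw_inverse by metis

lemma Abs_fadd: "fin a \<Longrightarrow> fin b \<Longrightarrow> Abs_fw (fadd a b) = Abs_fw a + Abs_fw b"
  by (rule Abs_eqI) (simp add: Rep_plus Abs_fw_inverse fadd_def)
lemma Abs_fsc: "fin a \<Longrightarrow> Abs_fw (fsc c a) = sc c * Abs_fw a"
  by (rule Abs_eqI) (simp add: Rep_sc_mult Abs_fw_inverse fsc_def fun_eq_iff)
lemma Abs_fsub: "fin a \<Longrightarrow> fin b \<Longrightarrow> Abs_fw (fsub a b) = Abs_fw a - Abs_fw b"
  by (simp add: fsub_def Abs_fadd Abs_fsc fin_fsc)
lemma Abs_mult: "fin a \<Longrightarrow> fin b \<Longrightarrow> Abs_fw (fa_mult a b) = Abs_fw a * Abs_fw b"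
  by (rule Abs_eqI) (simp add: Rep_times Abs_fw_inverse)
lemma Abs_fcomm: "fin a \<Longrightarrow> fin b \<Longrightarrow> Abs_fw (fcomm a b) = Abs_fw a * Abs_fw b - Abs_fw b * Abs_fw a"
  by (simp add: fcomm_def Abs_fsub Abs_mult fin_mult)
lemma Abs_scal: "Abs_fw (scal c) = sc c" by (simp add: sc_def)
lemma Abs_one: "Abs_fw fa_one = 1" by (simp add: one_fw_def)
lemma Abs_gn: "Abs_fw (gn g) = gnw g" by (simp add: gnw_def)
lemma Abs_fpow: "fin a \<Longrightarrow> Abs_fw (fpow a k) = Abs_fw a ^ k"
proof (induction k)
  case 0 then show ?case by (simp add: fpow_def Abs_one)
next
  case (Suc k)
  have "fpow a (Suc k) = fa_mult a (fpow a k)" by (simp add: fpow_def)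
  then show ?case using Suc by (simp add: Abs_mult fin_fpow)
qed
lemma Abs_fsum: "finite A \<Longrightarrow> (\<And>k. k \<in> A \<Longrightarrow> fin (T k)) \<Longrightarrow> Abs_fw (fsum T A) = (\<Sum>k\<in>A. Abs_fw (T k))"
  by (rule Abs_eqI) (simp add: Rep_sum Abs_fw_inverse fsum_def fun_eq_iff)

abbreviation "ee \<equiv> gnw E"
abbreviation "hh \<equiv> gnw H"
abbreviation "ff \<equiv> gnw F"
abbreviation "gg \<equiv> gnw Finv"
abbreviation "pp k \<equiv> gnw (P k)"

definition ccN :: "nat \<Rightarrow> complex \<Rightarrow> nat \<Rightarrow> complex" where
  "ccN N x k = (-1) ^ k * (x gchoose k) * (fact N / fact (N - k))"

definition t0 :: "nat \<Rightarrow> complex \<Rightarrow> gen \<Rightarrow> fa" where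
  "t0 n x g = (case g of
      E \<Rightarrow> fadd (gn E) (fsc x (fa_mult (fsub (gn H) (scal (1 + x))) (gn Finv)))
    | H \<Rightarrow> fsub (gn H) (scal (2 * x))
    | F \<Rightarrow> gn F
    | Finv \<Rightarrow> gn Finv
    | P j \<Rightarrow> (if j \<le> n then fsum (\<lambda>k. fsc ((-1) ^ k * (x gchoose k) * (fact (n - j) / fact (n - j - k)))
                      (fa_mult (fpow (gn Finv) k) (gn (P (j + k))))) {0..n - j} else gn (P j)))"

definition tt :: "nat \<Rightarrow> complex \<Rightarrow> gen \<Rightarrow> fw" where "tt n x g = Abs_fw (t0 n x g)"

lemma fin_t0: "fin (t0 n x g)"
  by (cases g) (auto simp: t0_def intro!: fin_intros)

lemma Rep_tt: "Rep_fw (tt n x g) = t0 n x g"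
  by (simp add: tt_def Abs_fw_inverse fin_t0)

lemma tt_E: "tt n x E = ee + sc x * ((hh - sc (1 + x)) * gg)"
  by (simp add: tt_def t0_def Abs_fadd Abs_fsc Abs_fsub Abs_mult Abs_scal Abs_gn fin_intros)
lemma tt_H: "tt n x H = hh - sc (2 * x)"
  by (simp add: tt_def t0_def Abs_fsub Abs_scal Abs_gn fin_intros)
lemma tt_F: "tt n x F = ff"
  by (simp add: tt_def t0_def Abs_gn)
lemma tt_Finv: "tt n x Finv = gg"
  by (simp add: tt_def t0_def Abs_gn)
lemma tt_P: "j \<le> n \<Longrightarrow> tt n x (P j) = (\<Sum>k\<in>{0..n-j}. sc (ccN (n - j) x k) * (gg ^ k * pp (j + k)))"
  by (simp add: tt_def t0_def ccN_def Abs_fsum Abs_fsc Abs_mult Abs_fpow Abs_gn fin_intros del: sc_mult)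
lemma tt_Pbig: "\<not> j \<le> n \<Longrightarrow> tt n x (P j) = pp j"
  by (simp add: tt_def t0_def Abs_gn)

lemma R2: "hh * ff - ff * hh + 2 * ff \<in> Jw n"
proof -
  have "fadd (fcomm (gn H) (gn F)) (fsc 2 (gn F)) \<in> rels n" by (simp add: rels_def)
  from rels_Jw[OF this] show ?thesis
    by (simp add: Abs_fadd Abs_fcomm Abs_fsc Abs_gn fin_intros)
qed

lemma R3: "ee * ff - ff * ee - hh \<in> Jw n"
proof -
  have "fsub (fcomm (gn E) (gn F)) (gn H) \<in> rels n" by (simp add: rels_def)
  from rels_Jw[OF this] show ?thesis
    by (simp add: Abs_fsub Abs_fcomm Abs_gn fin_intros)
qed

lemma R4: "ff * gg - 1 \<in> Jw n"
proof -
  have "fsub (fa_mult (gn F) (gn Finv)) fa_one \<in> rels n" by (simp add: rels_def)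
  from rels_Jw[OF this] show ?thesis
    by (simp add: Abs_fsub Abs_mult Abs_one Abs_gn fin_intros)
qed

lemma R5: "gg * ff - 1 \<in> Jw n"
proof -
  have "fsub (fa_mult (gn Finv) (gn F)) fa_one \<in> rels n" by (simp add: rels_def)
  from rels_Jw[OF this] show ?thesis
    by (simp add: Abs_fsub Abs_mult Abs_one Abs_gn fin_intros)
qed

lemma R8: "k \<le> n \<Longrightarrow> ff * pp k - pp k * ff - of_nat (n - k) * pp (k + 1) \<in> Jw n"
proof -
  assume k: "k \<le> n"
  have "fsub (fcomm (gn F) (gn (P k))) (fsc (of_nat (n - k)) (gn (P (k + 1)))) \<in> rels n"
    using k unfolding rels_def by blast
  from rels_Jw[OF this] show ?thesis
    by (simp add: Abs_fsub Abs_fcomm Abs_fsc Abs_gn fin_intros)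
qed

lemma R10: "n < k \<Longrightarrow> pp k \<in> Jw n"
proof -
  assume k: "n < k"
  have "gn (P k) \<in> rels n" using k unfolding rels_def by blast
  from rels_Jw[OF this] show ?thesis by (simp add: Abs_gn)
qed

declare sc_numeral[simp del] sc_of_nat[simp del]

lemma cgI: "a - b \<in> Jw n \<Longrightarrow> cg n a b" by (simp add: cg_def)
lemma cgI2: "r \<in> Jw n \<Longrightarrow> a - b = r \<Longrightarrow> cg n a b" by (simp add: cg_def)

lemma L_gf: "cg n (gg * ff) 1" using R5 by (rule cgI)
lemma L_fg: "cg n (ff * gg) 1" using R4 by (rule cgI)

lemma L_hf: "cg n (hh * ff) (ff * hh - sc 2 * ff)"
  by (rule cgI2[OF R2]) (simp add: sc_numeral)

lemma L_ef: "cg n (ee * ff) (ff * ee + hh)"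
  by (rule cgI2[OF R3]) simp

lemma L_pf: "k \<le> n \<Longrightarrow> cg n (pp k * ff) (ff * pp k - sc (of_nat (n - k)) * pp (k + 1))"
proof -
  assume "k \<le> n"
  then have "- (ff * pp k - pp k * ff - of_nat (n - k) * pp (k + 1)) \<in> Jw n"
    by (intro Jw_uminus R8)
  then show ?thesis by (rule cgI2) (simp add: sc_of_nat)
qed

lemma L_gpowf: "cg n (gg ^ Suc k * ff) (gg ^ k)"
proof -
  have "gg ^ Suc k * ff = gg ^ k * (gg * ff)" unfolding power_Suc2 by (simp only: mult.assoc)
  also have "cg n \<dots> (gg ^ k * 1)" by (intro cg_lmult L_gf)
  finally show ?thesis by simp
qed

lemma L_gmfm: "cg n (gg ^ m * ff ^ m) 1"
proof (induction m)
  case (Suc m)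
  have "gg ^ Suc m * ff ^ Suc m = gg ^ m * (gg * ff) * ff ^ m"
    unfolding power_Suc2[of gg] power_Suc[of ff] by (simp only: mult.assoc)
  also have "cg n \<dots> (gg ^ m * 1 * ff ^ m)" by (intro cg_mult cg_refl L_gf)
  also have "gg ^ m * 1 * ff ^ m = gg ^ m * ff ^ m" by simp
  also have "cg n \<dots> 1" by (rule Suc)
  finally show ?case .
qed simp

lemma L_fmgm: "cg n (ff ^ m * gg ^ m) 1"
proof (induction m)
  case (Suc m)
  have "ff ^ Suc m * gg ^ Suc m = ff ^ m * (ff * gg) * gg ^ m"
    unfolding power_Suc2[of ff] power_Suc[of gg] by (simp only: mult.assoc)
  also have "cg n \<dots> (ff ^ m * 1 * gg ^ m)" by (intro cg_mult cg_refl L_fg)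
  also have "ff ^ m * 1 * gg ^ m = ff ^ m * gg ^ m" by simp
  also have "cg n \<dots> 1" by (rule Suc)
  finally show ?case .
qed simp

lemma L_gh: "cg n (gg * hh) ((hh - sc 2) * gg)"
proof -
  have "cg n (gg * hh) (gg * hh * (ff * gg))"
    using cg_lmult[OF L_fg, of n "gg * hh"] by (simp add: cg_sym)
  also have "gg * hh * (ff * gg) = gg * (hh * ff) * gg" by (simp add: mult.assoc)
  also have "cg n \<dots> (gg * (ff * hh - sc 2 * ff) * gg)" by (intro cg_mult cg_refl L_hf)
  also have "gg * (ff * hh - sc 2 * ff) * gg = (gg * ff) * hh * gg - sc 2 * ((gg * ff) * gg)"
    by (simp only: right_diff_distrib left_diff_distrib sc_comm' mult.assoc)
  also have "cg n \<dots> (1 * hh * gg - sc 2 * (1 * gg))" by (intro cg_diff cg_mult cg_refl L_gf)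
  also have "1 * hh * gg - sc 2 * (1 * gg) = (hh - sc 2) * gg" by (simp add: algebra_simps)
  finally show ?thesis .
qed

lemma L_gef: "cg n (gg * ee * ff) (ee + (hh - sc 2) * gg)"
proof -
  have "gg * ee * ff = gg * (ee * ff)" by (simp add: mult.assoc)
  also have "cg n \<dots> (gg * (ff * ee + hh))" by (intro cg_mult cg_refl L_ef)
  also have "gg * (ff * ee + hh) = (gg * ff) * ee + gg * hh" by (simp add: algebra_simps)
  also have "cg n \<dots> (1 * ee + (hh - sc 2) * gg)" by (intro cg_add cg_mult cg_refl L_gf L_gh)
  finally show ?thesis by simp
qed

lemma conj_step: "gg ^ Suc m * X * ff ^ Suc m = gg * (gg ^ m * X * ff ^ m) * ff"
  unfolding power_Suc[of gg] power_Suc2[of ff] by (simp only: mult.assoc)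

lemma L_gYgf: "cg n (gg * Y * gg * ff) (gg * Y)"
proof -
  have "gg * Y * gg * ff = gg * Y * (gg * ff)" by (simp only: mult.assoc)
  also have "cg n \<dots> (gg * Y * 1)" by (intro cg_lmult L_gf)
  finally show ?thesis by simp
qed

lemma C_F: "cg n (gg ^ m * ff * ff ^ m) ff"
proof -
  have "gg ^ m * ff * ff ^ m = (gg ^ m * ff ^ m) * ff" by (simp add: mult.assoc power_commutes)
  also have "cg n \<dots> (1 * ff)" by (intro cg_rmult L_gmfm)
  finally show ?thesis by simp
qed

lemma C_G: "cg n (gg ^ m * gg * ff ^ m) gg"
proof -
  have "gg ^ m * gg * ff ^ m = gg * (gg ^ m * ff ^ m)" by (simp add: mult.assoc power_commutes)
  also have "cg n \<dots> (gg * 1)" by (intro cg_lmult L_gmfm)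
  finally show ?thesis by simp
qed

lemma L_ghc: "cg n (gg * (hh - sc c)) ((hh - sc (2 + c)) * gg)"
proof -
  have "gg * (hh - sc c) = gg * hh - sc c * gg" by (simp add: right_diff_distrib sc_comm)
  also have "cg n \<dots> ((hh - sc 2) * gg - sc c * gg)" by (intro cg_diff cg_refl L_gh)
  also have "(hh - sc 2) * gg - sc c * gg = (hh - sc (2 + c)) * gg" by (simp add: algebra_simps)
  finally show ?thesis .
qed

lemma C_H: "cg n (gg ^ m * hh * ff ^ m) (hh - sc (2 * of_nat m))"
proof (induction m)
  case 0 then show ?case by simp
next
  case (Suc m)
  let ?c = "2 * of_nat m :: complex"
  have "gg ^ Suc m * hh * ff ^ Suc m = gg * (gg ^ m * hh * ff ^ m) * ff" by (rule conj_step)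
  also have "cg n \<dots> (gg * (hh - sc ?c) * ff)" by (intro cg_mult cg_refl Suc)
  also have "cg n \<dots> ((hh - sc (2 + ?c)) * gg * ff)" by (intro cg_mult cg_refl L_ghc)
  also have "(hh - sc (2 + ?c)) * gg * ff = (hh - sc (2 + ?c)) * (gg * ff)" by (simp only: mult.assoc)
  also have "cg n \<dots> ((hh - sc (2 + ?c)) * 1)" by (intro cg_mult cg_refl L_gf)
  also have "(hh - sc (2 + ?c)) * 1 = hh - sc (2 * of_nat (Suc m))" by (simp add: algebra_simps)
  finally show ?case .
qed

lemma C_E: "cg n (gg ^ m * ee * ff ^ m) (ee + sc (of_nat m) * ((hh - sc (1 + of_nat m)) * gg))"
proof (induction m)
  case 0 then show ?case by simp
next
  case (Suc m)
  let ?x = "of_nat m :: complex"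
  have "gg ^ Suc m * ee * ff ^ Suc m = gg * (gg ^ m * ee * ff ^ m) * ff" by (rule conj_step)
  also have "cg n \<dots> (gg * (ee + sc ?x * ((hh - sc (1 + ?x)) * gg)) * ff)" by (intro cg_mult cg_refl Suc)
  also have "gg * (ee + sc ?x * ((hh - sc (1 + ?x)) * gg)) * ff =
      gg * ee * ff + sc ?x * (gg * (hh - sc (1 + ?x)) * gg * ff)"
    by (simp only: distrib_left distrib_right sc_comm' mult.assoc)
  also have "cg n \<dots> ((ee + (hh - sc 2) * gg) + sc ?x * (gg * (hh - sc (1 + ?x))))"
    by (intro cg_add cg_lmult L_gef L_gYgf)
  also have "cg n \<dots> ((ee + (hh - sc 2) * gg) + sc ?x * ((hh - sc (2 + (1 + ?x))) * gg))"
    by (intro cg_add cg_lmult cg_refl L_ghc)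
  also have "(ee + (hh - sc 2) * gg) + sc ?x * ((hh - sc (2 + (1 + ?x))) * gg) =
     ee + sc (of_nat (Suc m)) * ((hh - sc (1 + of_nat (Suc m))) * gg)"
  proof -
    have a: "(hh - sc 2) * gg = hh * gg - sc 2 * gg" by (simp only: left_diff_distrib mult.assoc)
    have b: "sc ?x * ((hh - sc (2 + (1 + ?x))) * gg) = sc ?x * (hh * gg) - sc (?x * (2 + (1 + ?x))) * gg"
      by (simp only: left_diff_distrib right_diff_distrib mult.assoc sc_mult)
    have c: "sc (of_nat (Suc m)) * ((hh - sc (1 + of_nat (Suc m))) * gg) =
       sc ?x * (hh * gg) + hh * gg - sc ((?x + 1) * (2 + ?x)) * gg"
    proof -
      have c1: "of_nat (Suc m) = ?x + 1" "1 + (?x + 1) = 2 + ?x" by simp_all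
      have "sc (?x + 1) * ((hh - sc (2 + ?x)) * gg) = sc (?x + 1) * (hh * gg) - sc (?x + 1) * (sc (2 + ?x) * gg)"
        by (simp only: left_diff_distrib right_diff_distrib mult.assoc)
      also have "sc (?x + 1) * (sc (2 + ?x) * gg) = sc ((?x + 1) * (2 + ?x)) * gg"
        by (simp only: sc_mult mult.assoc)
      also have "sc (?x + 1) * (hh * gg) = sc ?x * (hh * gg) + hh * gg"
        by (simp only: sc_add sc_one distrib_right mult_1_left)
      finally show ?thesis unfolding c1 .
    qed
    have d: "sc 2 * gg + sc (?x * (2 + (1 + ?x))) * gg = sc ((?x + 1) * (2 + ?x)) * gg"
    proof -
      have "sc 2 * gg + sc (?x * (2 + (1 + ?x))) * gg = sc (2 + ?x * (2 + (1 + ?x))) * gg"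
        by (simp only: sc_add distrib_right)
      also have "2 + ?x * (2 + (1 + ?x)) = (?x + 1) * (2 + ?x)" by (simp add: algebra_simps)
      finally show ?thesis .
    qed
    show ?thesis unfolding a b c using d by (simp add: algebra_simps del: sc_mult sc_add)
  qed
  finally show ?case .
qed

lemma shift_sum:
  fixes H :: "nat \<Rightarrow> 'a::ab_group_add"
  assumes "H 0 = 0" "H (Suc N) = 0"
  shows "(\<Sum>k\<in>{0..N}. H (Suc k)) = (\<Sum>k\<in>{0..N}. H k)"
proof -
  have "(\<Sum>k\<le>Suc N. H k) = H 0 + (\<Sum>k\<le>N. H (Suc k))" by (rule sum.atMost_Suc_shift)
  moreover have "(\<Sum>k\<le>Suc N. H k) = (\<Sum>k\<le>N. H k) + H (Suc N)" by (rule sum.atMost_Suc)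
  ultimately show ?thesis using assms by (simp add: atLeast0AtMost)
qed

lemma div_mult_cancel_aux: "(c::complex) \<noteq> 0 \<Longrightarrow> a / (c * b) * c = a / b"
  by (simp add: field_simps)

lemma fact_ratio: "Suc i \<le> N \<Longrightarrow> fact N / fact (N - i) * of_nat (N - i) = (fact N / fact (N - Suc i) :: complex)"
proof -
  assume a: "Suc i \<le> N"
  then have e: "N - i = Suc (N - Suc i)" by simp
  have "(of_nat (Suc (N - Suc i)) :: complex) \<noteq> 0" by (simp del: of_nat_Suc)
  then have "fact N / ((of_nat (Suc (N - Suc i)) :: complex) * fact (N - Suc i)) * of_nat (Suc (N - Suc i))
     = fact N / fact (N - Suc i)" by (rule div_mult_cancel_aux)
  then show ?thesis unfolding e fact_Suc by simp
qed

lemma coef_step: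
  assumes "k \<le> N"
  shows "ccN N (of_nat m) k - (if k = 0 then 0 else ccN N (of_nat m) (k - 1) * of_nat (N - (k - 1)))
     = ccN N (of_nat (Suc m)) k"
proof (cases k)
  case 0 then show ?thesis by (simp add: ccN_def)
next
  case (Suc i)
  let ?x = "of_nat m :: complex"
  let ?F = "fact N / fact (N - Suc i) :: complex"
  have fr: "fact N / fact (N - i) * of_nat (N - i) = ?F" using assms Suc by (intro fact_ratio) simp
  have h1: "ccN N ?x (k - 1) * of_nat (N - (k - 1)) = (-1) ^ i * (?x gchoose i) * (fact N / fact (N - i) * of_nat (N - i))"
    using Suc by (simp only: ccN_def mult.assoc diff_Suc_1)
  have h1': "(-1) ^ i * (?x gchoose i) * (fact N / fact (N - i) * of_nat (N - i)) = (-1) ^ i * (?x gchoose i) * ?F"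
    by (simp only: fr)
  have h2: "ccN N (of_nat (Suc m)) k = (-1) ^ Suc i * ((?x gchoose i) + (?x gchoose Suc i)) * ?F"
  proof -
    have e: "(of_nat (Suc m)::complex) = ?x + 1" by simp
    show ?thesis unfolding Suc ccN_def e gbinomial_Suc_Suc ..
  qed
  have h3: "ccN N ?x k = (-1) ^ Suc i * (?x gchoose Suc i) * ?F"
    unfolding Suc ccN_def ..
  have "ccN N ?x k - (if k = 0 then 0 else ccN N ?x (k - 1) * of_nat (N - (k - 1)))
      = ccN N ?x k - ccN N ?x (k - 1) * of_nat (N - (k - 1))" using Suc by simp
  also have "\<dots> = (-1) ^ Suc i * (?x gchoose Suc i) * ?F - (-1) ^ i * (?x gchoose i) * ?F"
    by (simp only: h1 h1' h3)
  also have "\<dots> = (-1) ^ Suc i * ((?x gchoose i) + (?x gchoose Suc i)) * ?F"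
    by (simp add: algebra_simps)
  also have "\<dots> = ccN N (of_nat (Suc m)) k" by (simp only: h2)
  finally show ?thesis .
qed

lemma L_Gstep:
  assumes "j + k \<le> n"
  shows "cg n (gg * (gg ^ k * pp (j + k)) * ff)
    (gg ^ k * pp (j + k) - sc (of_nat (n - j - k)) * (gg ^ Suc k * pp (j + Suc k)))"
proof -
  have "gg * (gg ^ k * pp (j + k)) * ff = gg ^ Suc k * (pp (j + k) * ff)" by (simp only: mult.assoc power_Suc)
  also have "cg n \<dots> (gg ^ Suc k * (ff * pp (j + k) - sc (of_nat (n - (j + k))) * pp (j + k + 1)))"
    by (intro cg_lmult L_pf assms)
  also have "gg ^ Suc k * (ff * pp (j + k) - sc (of_nat (n - (j + k))) * pp (j + k + 1)) =
     (gg ^ Suc k * ff) * pp (j + k) - sc (of_nat (n - j - k)) * (gg ^ Suc k * pp (j + Suc k))"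
    by (simp add: right_diff_distrib sc_comm' mult.assoc diff_diff_eq del: sc_of_nat)
  also have "cg n \<dots> (gg ^ k * pp (j + k) - sc (of_nat (n - j - k)) * (gg ^ Suc k * pp (j + Suc k)))"
    by (intro cg_diff cg_rmult cg_refl L_gpowf)
  finally show ?thesis .
qed

lemma C_P:
  assumes j: "j \<le> n"
  shows "cg n (gg ^ m * pp j * ff ^ m)
     (\<Sum>k\<in>{0..n-j}. sc (ccN (n - j) (of_nat m) k) * (gg ^ k * pp (j + k)))"
proof (induction m)
  case 0
  have "(\<Sum>k\<in>{0..n-j}. sc (ccN (n - j) (of_nat 0) k) * (gg ^ k * pp (j + k)))
      = sc (ccN (n - j) 0 0) * (gg ^ 0 * pp (j + 0)) + (\<Sum>k\<in>{Suc 0..n-j}. sc (ccN (n - j) 0 k) * (gg ^ k * pp (j + k)))"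
    by (simp add: sum.atLeast_Suc_atMost)
  also have "(\<Sum>k\<in>{Suc 0..n-j}. sc (ccN (n - j) 0 k) * (gg ^ k * pp (j + k))) = 0"
    by (intro sum.neutral) (auto simp: ccN_def gbinomial_0_left)
  finally show ?case by (simp add: ccN_def)
next
  case (Suc m)
  define N where "N = n - j"
  define G where "G k = gg ^ k * pp (j + k)" for k
  define c where "c k = ccN N (of_nat m) k" for k
  define b where "b k = (if k = 0 then 0 else c (k - 1) * of_nat (N - (k - 1)))" for k
  have IH: "cg n (gg ^ m * pp j * ff ^ m) (\<Sum>k\<in>{0..N}. sc (c k) * G k)"
    using Suc by (simp add: N_def G_def c_def)
  have "gg ^ Suc m * pp j * ff ^ Suc m = gg * (gg ^ m * pp j * ff ^ m) * ff" by (rule conj_step)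
  also have "cg n \<dots> (gg * (\<Sum>k\<in>{0..N}. sc (c k) * G k) * ff)" by (intro cg_mult cg_refl IH)
  also have "gg * (\<Sum>k\<in>{0..N}. sc (c k) * G k) * ff = (\<Sum>k\<in>{0..N}. sc (c k) * (gg * G k * ff))"
    by (simp add: sum_distrib_left sum_distrib_right sc_comm' mult.assoc del: sc_mult)
  also have "cg n \<dots> (\<Sum>k\<in>{0..N}. sc (c k) * (G k - sc (of_nat (N - k)) * G (Suc k)))"
  proof (intro cg_sum cg_lmult)
    fix k assume "k \<in> {0..N}"
    then have "j + k \<le> n" using j by (simp add: N_def)
    from L_Gstep[OF this] show "cg n (gg * G k * ff) (G k - sc (of_nat (N - k)) * G (Suc k))"
      by (simp add: G_def N_def del: sc_of_nat)
  qed
  also have "(\<Sum>k\<in>{0..N}. sc (c k) * (G k - sc (of_nat (N - k)) * G (Suc k)))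
     = (\<Sum>k\<in>{0..N}. sc (c k) * G k) - (\<Sum>k\<in>{0..N}. sc (b (Suc k)) * G (Suc k))"
  proof -
    have "\<And>k. sc (c k) * (G k - sc (of_nat (N - k)) * G (Suc k)) = sc (c k) * G k - sc (b (Suc k)) * G (Suc k)"
      by (simp only: right_diff_distrib mult.assoc[symmetric] sc_mult[symmetric]) (simp add: b_def)
    then show ?thesis by (simp only: sum_subtractf)
  qed
  also have "(\<Sum>k\<in>{0..N}. sc (b (Suc k)) * G (Suc k)) = (\<Sum>k\<in>{0..N}. sc (b k) * G k)"
    by (rule shift_sum[where H = "\<lambda>k. sc (b k) * G k"]) (simp_all add: b_def)
  also have "(\<Sum>k\<in>{0..N}. sc (c k) * G k) - (\<Sum>k\<in>{0..N}. sc (b k) * G k)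
      = (\<Sum>k\<in>{0..N}. sc (c k - b k) * G k)"
    by (simp add: sum_subtractf left_diff_distrib del: sc_mult)
  also have "\<dots> = (\<Sum>k\<in>{0..N}. sc (ccN N (of_nat (Suc m)) k) * G k)"
  proof (intro sum.cong refl)
    fix k assume "k \<in> {0..N}"
    then have "k \<le> N" by simp
    from coef_step[OF this, of m] show "sc (c k - b k) * G k = sc (ccN N (of_nat (Suc m)) k) * G k"
      unfolding b_def c_def by simp
  qed
  finally show ?case by (simp add: N_def G_def)
qed

lemma C_Pbig: "\<not> j \<le> n \<Longrightarrow> cg n (gg ^ m * pp j * ff ^ m) (pp j)"
proof -
  assume "\<not> j \<le> n"
  then have p: "pp j \<in> Jw n" by (intro R10) simp
  have "cg n (gg ^ m * pp j * ff ^ m) 0" by (intro cg_Jw Jw_lmult Jw_rmult p)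
  moreover have "cg n (pp j) 0" by (intro cg_Jw p)
  ultimately show ?thesis by (meson cg_sym cg_trans)
qed

lemma C_gen: "cg n (tt n (of_nat m) g) (gg ^ m * gnw g * ff ^ m)"
proof (cases g)
  case E then show ?thesis using C_E[of n m] by (simp add: tt_E cg_sym)
next
  case H then show ?thesis using C_H[of n m] by (simp add: tt_H cg_sym)
next
  case F then show ?thesis using C_F[of n m] by (simp add: tt_F cg_sym)
next
  case Finv then show ?thesis using C_G[of n m] by (simp add: tt_Finv cg_sym)
next
  case (P j)
  show ?thesis
  proof (cases "j \<le> n")
    case True then show ?thesis using C_P[OF True, of m] P by (simp add: tt_P cg_sym)
  next
    case False then show ?thesis using C_Pbig[OF False, of m] P by (simp add: tt_Pbig cg_sym)
  qed
qed

lemma C_monw: "cg n (monw (tt n (of_nat m)) w) (gg ^ m * dl w * ff ^ m)"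
proof (induction w)
  case Nil
  have "cg n 1 (gg ^ m * ff ^ m)" using L_gmfm[of n m] by (rule cg_sym)
  then show ?case by (simp add: monw_def dl_Nil)
next
  case (Cons g w)
  have "monw (tt n (of_nat m)) (g # w) = tt n (of_nat m) g * monw (tt n (of_nat m)) w"
    by (simp add: monw_def)
  also have "cg n \<dots> ((gg ^ m * gnw g * ff ^ m) * (gg ^ m * dl w * ff ^ m))"
    by (intro cg_mult C_gen Cons)
  also have "(gg ^ m * gnw g * ff ^ m) * (gg ^ m * dl w * ff ^ m) =
      (gg ^ m * gnw g) * (ff ^ m * gg ^ m) * (dl w * ff ^ m)" by (simp only: mult.assoc)
  also have "cg n \<dots> ((gg ^ m * gnw g) * 1 * (dl w * ff ^ m))" by (intro cg_mult cg_refl L_fmgm)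
  also have "(gg ^ m * gnw g) * 1 * (dl w * ff ^ m) = gg ^ m * dl (g # w) * ff ^ m"
    by (simp add: dl_Cons mult.assoc)
  finally show ?case .
qed

lemma conj_all: "cg n (subst (tt n (of_nat m)) a) (gg ^ m * a * ff ^ m)"
proof -
  have "subst (tt n (of_nat m)) a = (\<Sum>w\<in>supp a. sc (Rep_fw a w) * monw (tt n (of_nat m)) w)"
    by (simp only: subst_def)
  also have "cg n \<dots> (\<Sum>w\<in>supp a. sc (Rep_fw a w) * (gg ^ m * dl w * ff ^ m))"
    by (intro cg_sum cg_lmult C_monw)
  also have "(\<Sum>w\<in>supp a. sc (Rep_fw a w) * (gg ^ m * dl w * ff ^ m)) =
      gg ^ m * (\<Sum>w\<in>supp a. sc (Rep_fw a w) * dl w) * ff ^ m"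
    by (simp add: sum_distrib_left sum_distrib_right sc_comm' mult.assoc del: sc_mult)
  also have "\<dots> = gg ^ m * a * ff ^ m" using expand[of a] by simp
  finally show ?thesis .
qed

definition PP :: "(complex \<Rightarrow> complex) \<Rightarrow> bool" where "PP p \<longleftrightarrow> (\<exists>q. \<forall>x. p x = poly q x)"

lemma PP_const: "PP (\<lambda>x. c)"
  unfolding PP_def by (rule exI[of _ "[:c:]"]) simp
lemma PP_id: "PP (\<lambda>x. x)"
  unfolding PP_def by (rule exI[of _ "[:0, 1:]"]) simp
lemma PP_add: "PP p \<Longrightarrow> PP r \<Longrightarrow> PP (\<lambda>x. p x + r x)"
  unfolding PP_def by (metis poly_add)
lemma PP_diff: "PP p \<Longrightarrow> PP r \<Longrightarrow> PP (\<lambda>x. p x - r x)"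
  unfolding PP_def by (metis poly_diff)
lemma PP_mult: "PP p \<Longrightarrow> PP r \<Longrightarrow> PP (\<lambda>x. p x * r x)"
  unfolding PP_def by (metis poly_mult)
lemma PP_shift: "PP p \<Longrightarrow> PP (\<lambda>x. p (x + c))"
proof -
  assume "PP p"
  then obtain q where q: "\<And>x. p x = poly q x" by (auto simp: PP_def)
  have "\<And>x. p (x + c) = poly (pcompose q [:c, 1:]) x" by (simp add: q poly_pcompose add.commute)
  then show ?thesis unfolding PP_def by blast
qed
lemma PP_prod: "finite A \<Longrightarrow> (\<And>i. i \<in> A \<Longrightarrow> PP (f i)) \<Longrightarrow> PP (\<lambda>x. \<Prod>i\<in>A. f i x)"
proof (induction A rule: finite_induct)
  case empty then show ?case by (simp add: PP_const)
next
  case (insert a A) then show ?case by (simp add: PP_mult)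
qed
lemma PP_gchoose: "PP (\<lambda>x. x gchoose k)"
proof -
  have "PP (\<lambda>x. (1 / fact k) * (\<Prod>i=0..<k. x - of_nat i))"
    by (intro PP_mult PP_const PP_prod) (simp_all add: PP_diff PP_id PP_const)
  then show ?thesis by (simp add: gbinomial_prod_rev)
qed

lemma sum_list_lmult: "(W::'a::ring) * (\<Sum>z\<leftarrow>L. f z) = (\<Sum>z\<leftarrow>L. W * f z)"
  by (induction L) (simp_all add: distrib_left)
lemma sum_list_rmult: "(\<Sum>z\<leftarrow>L. f z) * (W::'a::ring) = (\<Sum>z\<leftarrow>L. f z * W)"
  by (induction L) (simp_all add: distrib_right)

definition PF :: "(complex \<Rightarrow> fw) \<Rightarrow> bool" where
  "PF Fu \<longleftrightarrow> (\<exists>L. (\<forall>z\<in>set L. PP (fst z)) \<and> (\<forall>x. Fu x = (\<Sum>z\<leftarrow>L. sc (fst z x) * snd z)))"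

lemma PF_const: "PF (\<lambda>x. W)"
  unfolding PF_def by (rule exI[of _ "[(\<lambda>x. 1, W)]"]) (simp add: PP_const)

lemma PF_scvar: "PP p \<Longrightarrow> PF (\<lambda>x. sc (p x))"
  unfolding PF_def by (rule exI[of _ "[(p, 1)]"]) simp

lemma PF_add: "PF Fu \<Longrightarrow> PF Gu \<Longrightarrow> PF (\<lambda>x. Fu x + Gu x)"
proof -
  assume "PF Fu" "PF Gu"
  then obtain L1 L2 where "\<forall>z\<in>set L1. PP (fst z)" "\<forall>x. Fu x = (\<Sum>z\<leftarrow>L1. sc (fst z x) * snd z)"
     "\<forall>z\<in>set L2. PP (fst z)" "\<forall>x. Gu x = (\<Sum>z\<leftarrow>L2. sc (fst z x) * snd z)"
    unfolding PF_def by blast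
  then show ?thesis unfolding PF_def by (intro exI[of _ "L1 @ L2"]) auto
qed

lemma PF_scal: "PP p \<Longrightarrow> PF Fu \<Longrightarrow> PF (\<lambda>x. sc (p x) * Fu x)"
proof -
  assume p: "PP p" and "PF Fu"
  then obtain L where L: "\<forall>z\<in>set L. PP (fst z)" "\<forall>x. Fu x = (\<Sum>z\<leftarrow>L. sc (fst z x) * snd z)"
    unfolding PF_def by blast
  let ?L = "map (\<lambda>z. (\<lambda>x. p x * fst z x, snd z)) L"
  have "\<forall>z\<in>set ?L. PP (fst z)" using L p by (auto intro: PP_mult)
  moreover have "\<forall>x. sc (p x) * Fu x = (\<Sum>z\<leftarrow>?L. sc (fst z x) * snd z)"
    using L by (simp add: sum_list_lmult o_def mult.assoc)
  ultimately show ?thesis unfolding PF_def by blast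
qed

lemma PF_lconst: "PF Fu \<Longrightarrow> PF (\<lambda>x. W * Fu x)"
proof -
  assume "PF Fu"
  then obtain L where L: "\<forall>z\<in>set L. PP (fst z)" "\<forall>x. Fu x = (\<Sum>z\<leftarrow>L. sc (fst z x) * snd z)"
    unfolding PF_def by blast
  let ?L = "map (\<lambda>z. (fst z, W * snd z)) L"
  have "\<forall>z\<in>set ?L. PP (fst z)" using L by auto
  moreover have "\<forall>x. W * Fu x = (\<Sum>z\<leftarrow>?L. sc (fst z x) * snd z)"
    using L by (simp add: sum_list_lmult o_def sc_comm' del: sc_mult)
  ultimately show ?thesis unfolding PF_def by blast
qed

lemma PF_sum_list: "(\<And>z. z \<in> set L \<Longrightarrow> PF (Hf z)) \<Longrightarrow> PF (\<lambda>x. \<Sum>z\<leftarrow>L. Hf z x)"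
proof (induction L)
  case Nil then show ?case using PF_const[of 0] by simp
next
  case (Cons a L) then show ?case by (simp add: PF_add)
qed

lemma PF_mult: "PF Fu \<Longrightarrow> PF Gu \<Longrightarrow> PF (\<lambda>x. Fu x * Gu x)"
proof -
  assume "PF Fu" and Gu: "PF Gu"
  then obtain L where L: "\<forall>z\<in>set L. PP (fst z)" "\<forall>x. Fu x = (\<Sum>z\<leftarrow>L. sc (fst z x) * snd z)"
    unfolding PF_def by blast
  have "PF (\<lambda>x. \<Sum>z\<leftarrow>L. sc (fst z x) * (snd z * Gu x))"
    using L(1) Gu by (intro PF_sum_list PF_scal PF_lconst) auto
  moreover have "\<And>x. Fu x * Gu x = (\<Sum>z\<leftarrow>L. sc (fst z x) * (snd z * Gu x))"
    using L(2) by (simp add: sum_list_rmult mult.assoc)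
  ultimately show ?thesis by simp
qed

lemma PF_sum: "finite A \<Longrightarrow> (\<And>i. i \<in> A \<Longrightarrow> PF (Hf i)) \<Longrightarrow> PF (\<lambda>x. \<Sum>i\<in>A. Hf i x)"
proof (induction A rule: finite_induct)
  case empty then show ?case using PF_const[of 0] by simp
next
  case (insert a A) then show ?case by (simp add: PF_add)
qed

lemma PF_diff: "PF Fu \<Longrightarrow> PF Gu \<Longrightarrow> PF (\<lambda>x. Fu x - Gu x)"
proof -
  assume "PF Fu" "PF Gu"
  then have "PF (\<lambda>x. Fu x + sc ((\<lambda>x. -1) x) * Gu x)" by (intro PF_add PF_scal PP_const)
  then show ?thesis by simp
qed

lemma PF_shift: "PF Fu \<Longrightarrow> PF (\<lambda>x. Fu (x + c))"
proof -
  assume "PF Fu"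
  then obtain L where L: "\<forall>z\<in>set L. PP (fst z)" "\<forall>x. Fu x = (\<Sum>z\<leftarrow>L. sc (fst z x) * snd z)"
    unfolding PF_def by blast
  let ?L = "map (\<lambda>z. (\<lambda>x. fst z (x + c), snd z)) L"
  have "\<forall>z\<in>set ?L. PP (fst z)" using L by (auto intro: PP_shift)
  moreover have "\<forall>x. Fu (x + c) = (\<Sum>z\<leftarrow>?L. sc (fst z x) * snd z)"
    using L by (simp add: o_def)
  ultimately show ?thesis unfolding PF_def by blast
qed

lemma subst_sum_list: "subst s (\<Sum>z\<leftarrow>L. f z) = (\<Sum>z\<leftarrow>L. subst s (f z))"
  by (induction L) (simp_all add: subst_zero subst_add)

lemma PF_subst_arg: "PF Fu \<Longrightarrow> PF (\<lambda>x. subst s (Fu x))"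
proof -
  assume "PF Fu"
  then obtain L where L: "\<forall>z\<in>set L. PP (fst z)" "\<forall>x. Fu x = (\<Sum>z\<leftarrow>L. sc (fst z x) * snd z)"
    unfolding PF_def by blast
  let ?L = "map (\<lambda>z. (fst z, subst s (snd z))) L"
  have "\<forall>z\<in>set ?L. PP (fst z)" using L by auto
  moreover have "\<forall>x. subst s (Fu x) = (\<Sum>z\<leftarrow>?L. sc (fst z x) * snd z)"
    using L by (simp add: subst_sum_list subst_sc o_def del: sc_mult)
  ultimately show ?thesis unfolding PF_def by blast
qed

lemma PF_monw: "(\<And>g. PF (\<lambda>x. t x g)) \<Longrightarrow> PF (\<lambda>x. monw (t x) w)"
proof (induction w)
  case Nil then show ?case using PF_const[of 1] by (simp add: monw_def)
next
  case (Cons g w)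
  have "PF (\<lambda>x. t x g * monw (t x) w)" by (intro PF_mult Cons)
  then show ?case by (simp add: monw_def)
qed

lemma PF_subst_t: "(\<And>g. PF (\<lambda>x. t x g)) \<Longrightarrow> PF (\<lambda>x. subst (t x) a)"
  unfolding subst_def by (intro PF_sum finite_supp PF_lconst PF_monw) auto

lemma PF_tt: "PF (\<lambda>x. tt n x g)"
proof (cases g)
  case E
  have "PF (\<lambda>x. ee + sc x * ((hh - sc (1 + x)) * gg))"
    by (intro PF_add PF_const PF_mult PF_scvar PF_diff PP_id PP_add PP_const)
  then show ?thesis using E by (simp add: tt_E del: sc_add sc_mult)
next
  case H
  have "PF (\<lambda>x. hh - sc (2 * x))"
    by (intro PF_diff PF_const PF_scvar PP_mult PP_id PP_const)
  then show ?thesis using H by (simp add: tt_H del: sc_mult)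
next
  case F then show ?thesis by (simp add: tt_F PF_const)
next
  case Finv then show ?thesis by (simp add: tt_Finv PF_const)
next
  case (P j)
  show ?thesis
  proof (cases "j \<le> n")
    case True
    have "PF (\<lambda>x. \<Sum>k\<in>{0..n-j}. sc (ccN (n - j) x k) * (gg ^ k * pp (j + k)))"
      unfolding ccN_def
      by (intro PF_sum PF_mult PF_scvar PF_const PP_mult PP_const PP_gchoose) simp
    then show ?thesis using True P by (simp add: tt_P del: sc_mult)
  next
    case False then show ?thesis using P by (simp add: tt_Pbig PF_const)
  qed
qed

lemma binom_diff: "((y::complex) + 1) ^ d - y ^ d = (\<Sum>i<d. of_nat (d choose i) * y ^ i)"
proof -
  have "(y + 1) ^ d = (\<Sum>k\<le>d. of_nat (d choose k) * y ^ k * 1 ^ (d - k))" by (rule binomial_ring)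
  also have "\<dots> = (\<Sum>k<Suc d. of_nat (d choose k) * y ^ k)" by (simp add: lessThan_Suc_atMost)
  also have "\<dots> = (\<Sum>k<d. of_nat (d choose k) * y ^ k) + y ^ d" by simp
  finally show ?thesis by simp
qed

lemma sc_swap: "sc (a * b) * V = sc b * (sc a * V)"
proof -
  have "sc (a * b) = sc (b * a)" by (simp only: mult.commute)
  then show ?thesis by (simp only: sc_mult mult.assoc)
qed

lemma sc_pow_split: "sc (of_nat (d choose i) * y ^ i) * V = sc (y ^ i) * (sc (of_nat (d choose i)) * V)"
  by (rule sc_swap)

lemma diff_step:
  "(\<Sum>d\<le>Suc D. sc ((y + 1) ^ d) * V d) - (\<Sum>d\<le>Suc D. sc (y ^ d) * V d)
   = (\<Sum>i\<le>D. sc (y ^ i) * (\<Sum>d\<in>{Suc i..Suc D}. sc (of_nat (d choose i)) * V d))"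
proof -
  have "(\<Sum>d\<le>Suc D. sc ((y + 1) ^ d) * V d) - (\<Sum>d\<le>Suc D. sc (y ^ d) * V d)
      = (\<Sum>d\<le>Suc D. sc ((y + 1) ^ d - y ^ d) * V d)"
    by (simp only: sum_subtractf[symmetric] sc_diff left_diff_distrib)
  also have "\<dots> = (\<Sum>d\<le>Suc D. \<Sum>i<d. sc (of_nat (d choose i) * y ^ i) * V d)"
    by (simp only: binom_diff sc_sum sum_distrib_right)
  also have "\<dots> = (\<Sum>i<Suc D. \<Sum>d\<in>{Suc i..Suc D}. sc (of_nat (d choose i) * y ^ i) * V d)"
    by (rule sum.nested_swap')
  also have "\<dots> = (\<Sum>i\<le>D. \<Sum>d\<in>{Suc i..Suc D}. sc (y ^ i) * (sc (of_nat (d choose i)) * V d))"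
    by (simp only: sc_pow_split lessThan_Suc_atMost)
  also have "\<dots> = (\<Sum>i\<le>D. sc (y ^ i) * (\<Sum>d\<in>{Suc i..Suc D}. sc (of_nat (d choose i)) * V d))"
    by (simp only: sum_distrib_left)
  finally show ?thesis .
qed

lemma vanish:
  "\<forall>V. (\<forall>m::nat. (\<Sum>d\<le>D. sc (of_nat m ^ d) * V d) \<in> Jw n) \<longrightarrow> (\<forall>d\<le>D. V d \<in> Jw n)"
proof (induction D)
  case 0
  show ?case
  proof (rule allI, rule impI)
    fix V :: "nat \<Rightarrow> fw"
    assume "\<forall>m::nat. (\<Sum>d\<le>0. sc (of_nat m ^ d) * V d) \<in> Jw n"
    then have "(\<Sum>d\<le>0. sc (of_nat 0 ^ d) * V d) \<in> Jw n" by blast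
    then have "V 0 \<in> Jw n" by simp
    then show "\<forall>d\<le>0. V d \<in> Jw n" by simp
  qed
next
  case (Suc D)
  show ?case
  proof (rule allI, rule impI)
    fix V :: "nat \<Rightarrow> fw"
    assume A: "\<forall>m::nat. (\<Sum>d\<le>Suc D. sc (of_nat m ^ d) * V d) \<in> Jw n"
    define V' where "V' i = (\<Sum>d\<in>{Suc i..Suc D}. sc (of_nat (d choose i)) * V d)" for i
    have "\<forall>m::nat. (\<Sum>i\<le>D. sc (of_nat m ^ i) * V' i) \<in> Jw n"
    proof
      fix m :: nat
      have "(\<Sum>i\<le>D. sc (of_nat m ^ i) * V' i) =
        (\<Sum>d\<le>Suc D. sc ((of_nat m + 1) ^ d) * V d) - (\<Sum>d\<le>Suc D. sc (of_nat m ^ d) * V d)"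
        unfolding V'_def by (rule diff_step[symmetric])
      also have "\<dots> \<in> Jw n" using A[rule_format, of "Suc m"] A[rule_format, of m]
        by (intro Jw_diff) (simp_all add: add.commute)
      finally show "(\<Sum>i\<le>D. sc (of_nat m ^ i) * V' i) \<in> Jw n" .
    qed
    with Suc.IH have V': "\<forall>i\<le>D. V' i \<in> Jw n" by blast
    have v: "V' D = sc (of_nat (Suc D)) * V (Suc D)" by (simp add: V'_def)
    have c: "(1 / of_nat (Suc D)) * (of_nat (Suc D)::complex) = 1"
      by (simp only: of_nat_eq_0_iff nat.simps divide_self_if mult.commute[of "1 / _"] times_divide_eq_right mult_1_right) simp
    have "sc (1 / of_nat (Suc D)) * V' D = sc ((1 / of_nat (Suc D)) * of_nat (Suc D)) * V (Suc D)"
      by (simp only: v sc_mult mult.assoc)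
    then have "sc (1 / of_nat (Suc D)) * V' D = V (Suc D)"
      by (simp only: c sc_one mult_1_left)
    then have last: "V (Suc D) \<in> Jw n" using V' by (metis Jw_lmult order_refl)
    have "\<forall>m::nat. (\<Sum>d\<le>D. sc (of_nat m ^ d) * V d) \<in> Jw n"
    proof
      fix m :: nat
      have "(\<Sum>d\<le>D. sc (of_nat m ^ d) * V d) =
        (\<Sum>d\<le>Suc D. sc (of_nat m ^ d) * V d) - sc (of_nat m ^ Suc D) * V (Suc D)" by simp
      also have "\<dots> \<in> Jw n" using A last by (intro Jw_diff Jw_lmult) auto
      finally show "(\<Sum>d\<le>D. sc (of_nat m ^ d) * V d) \<in> Jw n" .
    qed
    with Suc.IH have "\<forall>d\<le>D. V d \<in> Jw n" by blast
    then show "\<forall>d\<le>Suc D. V d \<in> Jw n" using last by (auto simp: le_Suc_eq)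
  qed
qed

lemma extend_rep:
  assumes "D \<le> D'"
  shows "(\<Sum>d\<le>D. sc (x ^ d) * V d) = (\<Sum>d\<le>D'. sc (x ^ d) * (if d \<le> D then V d else 0))"
proof -
  have "(\<Sum>d\<le>D. sc (x ^ d) * V d) = (\<Sum>d\<le>D. sc (x ^ d) * (if d \<le> D then V d else 0))"
    by (intro sum.cong) auto
  also have "\<dots> = (\<Sum>d\<le>D'. sc (x ^ d) * (if d \<le> D then V d else 0))"
    using assms by (intro sum.mono_neutral_left) auto
  finally show ?thesis .
qed

lemma PF_rep: "PF Fu \<Longrightarrow> \<exists>D V. \<forall>x. Fu x = (\<Sum>d\<le>D. sc (x ^ d) * V d)"
proof -
  assume "PF Fu"
  then obtain L where L: "\<forall>z\<in>set L. PP (fst z)" "\<forall>x. Fu x = (\<Sum>z\<leftarrow>L. sc (fst z x) * snd z)"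
    unfolding PF_def by blast
  have "\<exists>D V. \<forall>x. (\<Sum>z\<leftarrow>L. sc (fst z x) * snd z) = (\<Sum>d\<le>D. sc (x ^ d) * V d)"
    using L(1)
  proof (induction L)
    case Nil then show ?case by (intro exI[of _ 0] exI[of _ "\<lambda>d. 0"]) simp
  next
    case (Cons z L)
    then obtain D2 V2 where 2: "\<forall>x. (\<Sum>z\<leftarrow>L. sc (fst z x) * snd z) = (\<Sum>d\<le>D2. sc (x ^ d) * V2 d)"
      by auto
    from Cons.prems obtain q where q: "\<And>x. fst z x = poly q x" by (auto simp: PP_def)
    define D1 where "D1 = degree q"
    define V1 where "V1 d = sc (coeff q d) * snd z" for d
    have 1: "\<forall>x. sc (fst z x) * snd z = (\<Sum>d\<le>D1. sc (x ^ d) * V1 d)"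
    proof
      fix x
      have "sc (fst z x) * snd z = (\<Sum>d\<le>D1. sc (coeff q d * x ^ d) * snd z)"
        by (simp only: q poly_altdef D1_def sc_sum sum_distrib_right)
      also have "\<dots> = (\<Sum>d\<le>D1. sc (x ^ d) * V1 d)"
        by (simp only: V1_def sc_swap)
      finally show "sc (fst z x) * snd z = (\<Sum>d\<le>D1. sc (x ^ d) * V1 d)" .
    qed
    define D where "D = max D1 D2"
    define V where "V d = (if d \<le> D1 then V1 d else 0) + (if d \<le> D2 then V2 d else 0)" for d
    have "\<forall>x. (\<Sum>z\<leftarrow>z # L. sc (fst z x) * snd z) = (\<Sum>d\<le>D. sc (x ^ d) * V d)"
    proof
      fix x
      have "(\<Sum>z\<leftarrow>z # L. sc (fst z x) * snd z) = (\<Sum>d\<le>D1. sc (x ^ d) * V1 d) + (\<Sum>d\<le>D2. sc (x ^ d) * V2 d)"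
        using 1 2 by simp
      also have "\<dots> = (\<Sum>d\<le>D. sc (x ^ d) * (if d \<le> D1 then V1 d else 0)) + (\<Sum>d\<le>D. sc (x ^ d) * (if d \<le> D2 then V2 d else 0))"
        unfolding D_def by (intro arg_cong2[where f = "(+)"] extend_rep) auto
      also have "\<dots> = (\<Sum>d\<le>D. sc (x ^ d) * V d)"
        by (simp only: V_def distrib_left sum.distrib)
      finally show "(\<Sum>z\<leftarrow>z # L. sc (fst z x) * snd z) = (\<Sum>d\<le>D. sc (x ^ d) * V d)" .
    qed
    then show ?case by blast
  qed
  then show ?thesis using L(2) by simp
qed

lemma PF_vanish:
  assumes "PF Fu" "\<And>m::nat. Fu (of_nat m) \<in> Jw n"
  shows "Fu x \<in> Jw n"
proof -
  obtain D V where DV: "\<And>x. Fu x = (\<Sum>d\<le>D. sc (x ^ d) * V d)" using PF_rep[OF assms(1)] by blast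
  have "\<forall>d\<le>D. V d \<in> Jw n" using vanish[of D n] assms(2) DV by auto
  then show ?thesis unfolding DV by (intro Jw_sum Jw_lmult) auto
qed

lemma cg_Jw_trans: "cg n a b \<Longrightarrow> b \<in> Jw n \<Longrightarrow> a \<in> Jw n"
proof -
  assume "cg n a b" "b \<in> Jw n"
  then have "(a - b) + b \<in> Jw n" unfolding cg_def by (rule Jw_add)
  then show ?thesis by simp
qed

lemma rels_sub: "r \<in> rels n \<Longrightarrow> subst (tt n x) (Abs_fw r) \<in> Jw n"
proof -
  assume r: "r \<in> rels n"
  show ?thesis
  proof (rule PF_vanish[where Fu = "\<lambda>x. subst (tt n x) (Abs_fw r)"])
    show "PF (\<lambda>x. subst (tt n x) (Abs_fw r))" by (intro PF_subst_t PF_tt)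
  next
    fix m :: nat
    have "gg ^ m * Abs_fw r * ff ^ m \<in> Jw n" by (intro Jw_lmult Jw_rmult rels_Jw r)
    then show "subst (tt n (of_nat m)) (Abs_fw r) \<in> Jw n" by (rule cg_Jw_trans[OF conj_all])
  qed
qed

definition hA :: "nat \<Rightarrow> complex \<Rightarrow> fa \<Rightarrow> fa" where "hA n x r = Rep_fw (subst (tt n x) (Abs_fw r))"

lemma hA_hom: "hA n x \<in> ring_hom FA FA"
proof (rule ring_hom_memI)
  fix r s assume r: "r \<in> carrier FA" and s: "s \<in> carrier FA"
  then have fr: "fin r" and fs: "fin s" by (simp_all add: FA_simps)
  show "hA n x r \<in> carrier FA" by (rule Rep_carrier[unfolded hA_def[symmetric], of "subst (tt n x) (Abs_fw r)", folded hA_def]) 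
  show "hA n x (r \<otimes>\<^bsub>FA\<^esub> s) = hA n x r \<otimes>\<^bsub>FA\<^esub> hA n x s"
    using fr fs by (simp add: hA_def FA_simps Abs_mult subst_mult Rep_times)
  show "hA n x (r \<oplus>\<^bsub>FA\<^esub> s) = hA n x r \<oplus>\<^bsub>FA\<^esub> hA n x s"
    unfolding FA_simps hA_def Abs_fadd[OF fr fs] subst_add by (simp add: Rep_plus fadd_def)
next
  show "hA n x \<one>\<^bsub>FA\<^esub> = \<one>\<^bsub>FA\<^esub>"
    by (simp add: hA_def FA_simps Abs_one subst_one Rep_one)
qed

lemma Jw_subst: "a \<in> Jw n \<Longrightarrow> subst (tt n x) a \<in> Jw n"
proof -
  assume a: "a \<in> Jw n"
  have id: "ideal {r \<in> carrier FA. hA n x r \<in> Jn n} FA"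
    by (rule ring_hom_ring.ideal_vimage[OF ring_hom_ringI2[OF ring_FA ring_FA hA_hom] ideal_J])
  have h: "rels n \<subseteq> {r \<in> carrier FA. hA n x r \<in> Jn n}"
  proof
    fix r assume r: "r \<in> rels n"
    then have "r \<in> carrier FA" using rels_carrier by blast
    moreover have "hA n x r \<in> Jn n" using rels_sub[OF r, of x] by (simp only: hA_def Jw_def mem_Collect_eq)
    ultimately show "r \<in> {r \<in> carrier FA. hA n x r \<in> Jn n}" by blast
  qed
  have "genideal FA (rels n) \<subseteq> {r \<in> carrier FA. hA n x r \<in> Jn n}"
    by (rule FA.genideal_minimal[OF id h])
  then have "Jn n \<subseteq> {r \<in> carrier FA. hA n x r \<in> Jn n}" by (simp only: Jn_def)
  moreover have "Rep_fw a \<in> Jn n" using a by (simp only: Jw_def mem_Collect_eq)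
  ultimately have "hA n x (Rep_fw a) \<in> Jn n" by blast
  then show ?thesis by (simp only: hA_def Rep_fw_inverse Jw_def mem_Collect_eq)
qed

lemma cg_subst: "cg n a b \<Longrightarrow> cg n (subst (tt n x) a) (subst (tt n x) b)"
proof -
  assume "cg n a b"
  then have "subst (tt n x) (a - b) \<in> Jw n" unfolding cg_def by (rule Jw_subst)
  then show ?thesis unfolding cg_def subst_diff .
qed

definition th :: "nat \<Rightarrow> complex \<Rightarrow> fa set \<Rightarrow> fa set" where
  "th n x X = q n (subst (tt n x) (SOME a. X = q n a))"

lemma th_q: "th n x (q n a) = q n (subst (tt n x) a)"
proof -
  define b where "b = (SOME b. q n a = q n b)"
  have ex: "\<exists>b. q n a = q n b" by (rule exI[of _ a]) (rule refl)
  have "q n a = q n b" unfolding b_def by (rule someI_ex[where P = "\<lambda>b. q n a = q n b", OF ex])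
  then have "cg n a b" by (simp only: q_eq_cg)
  then have "cg n (subst (tt n x) b) (subst (tt n x) a)"
    by (rule cg_subst[OF cg_sym])
  then have "q n (subst (tt n x) b) = q n (subst (tt n x) a)" by (simp only: q_eq_cg)
  moreover have "th n x (q n a) = q n (subst (tt n x) b)" unfolding th_def b_def by (rule refl)
  ultimately show ?thesis by (rule trans[rotated])
qed

lemma th_hom: "th n x \<in> ring_hom (Uf n) (Uf n)"
proof (rule ring_hom_memI)
  fix X Y assume X: "X \<in> carrier (Uf n)" and Y: "Y \<in> carrier (Uf n)"
  obtain a where a: "X = q n a" using q_surj[OF X] by blast
  obtain b where b: "Y = q n b" using q_surj[OF Y] by blast
  show "th n x X \<in> carrier (Uf n)" by (simp only: a th_q q_carrier)
  have "th n x (X \<otimes>\<^bsub>Uf n\<^esub> Y) = th n x (q n (a * b))" by (simp only: a b q_mult)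
  also have "\<dots> = q n (subst (tt n x) a * subst (tt n x) b)" by (simp only: th_q subst_mult)
  also have "\<dots> = th n x X \<otimes>\<^bsub>Uf n\<^esub> th n x Y" by (simp only: a b th_q q_mult)
  finally show "th n x (X \<otimes>\<^bsub>Uf n\<^esub> Y) = th n x X \<otimes>\<^bsub>Uf n\<^esub> th n x Y" .
  have "th n x (X \<oplus>\<^bsub>Uf n\<^esub> Y) = th n x (q n (a + b))" by (simp only: a b q_add)
  also have "\<dots> = q n (subst (tt n x) a + subst (tt n x) b)" by (simp only: th_q subst_add)
  also have "\<dots> = th n x X \<oplus>\<^bsub>Uf n\<^esub> th n x Y" by (simp only: a b th_q q_add)
  finally show "th n x (X \<oplus>\<^bsub>Uf n\<^esub> Y) = th n x X \<oplus>\<^bsub>Uf n\<^esub> th n x Y" .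
next
  have "th n x \<one>\<^bsub>Uf n\<^esub> = th n x (q n 1)" by (simp only: q_one)
  also have "\<dots> = \<one>\<^bsub>Uf n\<^esub>" by (simp only: th_q subst_one) (rule q_one)
  finally show "th n x \<one>\<^bsub>Uf n\<^esub> = \<one>\<^bsub>Uf n\<^esub>" .
qed

lemma B1: "cg n (subst (tt n (of_nat m')) (subst (tt n (of_nat m)) a)) (subst (tt n (of_nat (m + m'))) a)"
proof -
  have "cg n (subst (tt n (of_nat m')) (subst (tt n (of_nat m)) a)) (gg ^ m' * subst (tt n (of_nat m)) a * ff ^ m')"
    by (rule conj_all)
  also have "cg n \<dots> (gg ^ m' * (gg ^ m * a * ff ^ m) * ff ^ m')"
    by (intro cg_mult cg_refl conj_all)
  also have "gg ^ m' * (gg ^ m * a * ff ^ m) * ff ^ m' = gg ^ (m + m') * a * ff ^ (m + m')"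
  proof -
    have "gg ^ (m + m') = gg ^ m' * gg ^ m" by (metis power_add add.commute)
    then show ?thesis by (simp only: power_add[of ff] mult.assoc)
  qed
  also have "cg n \<dots> (subst (tt n (of_nat (m + m'))) a)" by (rule cg_sym[OF conj_all])
  finally show ?thesis .
qed

lemma B1': "cg n (subst (tt n y) (subst (tt n (of_nat m)) a)) (subst (tt n (of_nat m + y)) a)"
proof -
  let ?Fu = "\<lambda>y. subst (tt n y) (subst (tt n (of_nat m)) a) - subst (tt n (y + of_nat m)) a"
  have "?Fu y \<in> Jw n"
  proof (rule PF_vanish[where Fu = ?Fu])
    show "PF ?Fu"
      by (rule PF_diff[OF PF_subst_t[OF PF_tt] PF_shift[where Fu = "\<lambda>z. subst (tt n z) a", OF PF_subst_t[OF PF_tt]]])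
  next
    fix m' :: nat
    show "?Fu (of_nat m') \<in> Jw n"
      using B1[of n m' m a] by (simp add: cg_def add.commute)
  qed
  then show ?thesis by (simp add: cg_def add.commute)
qed

lemma B2: "cg n (subst (tt n y) (subst (tt n x) a)) (subst (tt n (x + y)) a)"
proof -
  let ?Fu = "\<lambda>x. subst (tt n y) (subst (tt n x) a) - subst (tt n (x + y)) a"
  have "?Fu x \<in> Jw n"
  proof (rule PF_vanish[where Fu = ?Fu])
    show "PF ?Fu"
      by (rule PF_diff[OF PF_subst_arg[OF PF_subst_t[OF PF_tt]] PF_shift[where Fu = "\<lambda>z. subst (tt n z) a", OF PF_subst_t[OF PF_tt]]])
  next
    fix m :: nat
    show "?Fu (of_nat m) \<in> Jw n"
      using B1'[of n y m a] by (simp add: cg_def)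
  qed
  then show ?thesis by (simp add: cg_def)
qed

lemma th_inv: "X \<in> carrier (Uf n) \<Longrightarrow> th n (- x) (th n x X) = X"
proof -
  assume X: "X \<in> carrier (Uf n)"
  obtain a where a: "X = q n a" using q_surj[OF X] by blast
  have "cg n (subst (tt n (- x)) (subst (tt n x) a)) (subst (tt n (x + - x)) a)" by (rule B2)
  also have "cg n (subst (tt n (x + - x)) a) (gg ^ 0 * a * ff ^ 0)"
    using conj_all[of n 0 a] by simp
  finally have "cg n (subst (tt n (- x)) (subst (tt n x) a)) a" by simp
  then show ?thesis by (simp add: a th_q q_eq_cg)
qed

lemma cls_gn: "cls n (gn g) = q n (gnw g)" by (simp add: q_def Rep_gnw)
lemma cls_scal: "cls n (scal c) = q n (sc c)" by (simp add: q_def sc_def Abs_fw_inverse fin_scal)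

lemma th_gen: "th n x (cls n (gn g)) = cls n (t0 n x g)"
  by (simp only: cls_gn th_q subst_gnw) (simp add: q_def Rep_tt)

lemma existence: "alg_aut n (th n x) \<and> theta_prop n x (th n x)"
proof
  have bij: "bij_betw (th n x) (carrier (Uf n)) (carrier (Uf n))"
  proof (rule bij_betwI[where g = "th n (- x)"])
    show "th n x \<in> carrier (Uf n) \<rightarrow> carrier (Uf n)" using ring_hom_closed[OF th_hom] by blast
    show "th n (- x) \<in> carrier (Uf n) \<rightarrow> carrier (Uf n)" using ring_hom_closed[OF th_hom] by blast
    show "\<And>X. X \<in> carrier (Uf n) \<Longrightarrow> th n (- x) (th n x X) = X" by (rule th_inv)
    show "\<And>X. X \<in> carrier (Uf n) \<Longrightarrow> th n x (th n (- x) X) = X"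
      using th_inv[of _ n "- x"] by simp
  qed
  show "alg_aut n (th n x)"
    unfolding alg_aut_def ring_iso_def
    using th_hom bij by (simp add: cls_scal th_q subst_sc1)
  show "theta_prop n x (th n x)"
    unfolding theta_prop_def th_gen by (simp add: t0_def)
qed

lemma uniq_base:
  assumes h1: "s1 \<in> ring_hom (Uf n) (Uf n)" and h2: "s2 \<in> ring_hom (Uf n) (Uf n)"
    and gen: "\<And>g. s1 (q n (gnw g)) = s2 (q n (gnw g))"
    and scl: "\<And>c. s1 (q n (sc c)) = s2 (q n (sc c))"
    and X: "X \<in> carrier (Uf n)"
  shows "s1 X = s2 X"
proof -
  have dl: "s1 (q n (dl w)) = s2 (q n (dl w))" for w
  proof (induction w)
    case Nil
    show ?case by (simp only: dl_Nil q_one ring_hom_one[OF h1] ring_hom_one[OF h2])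
  next
    case (Cons g w)
    have "s1 (q n (dl (g # w))) = s1 (q n (gnw g)) \<otimes>\<^bsub>Uf n\<^esub> s1 (q n (dl w))"
      by (simp only: dl_Cons q_mult ring_hom_mult[OF h1 q_carrier q_carrier])
    also have "\<dots> = s2 (q n (gnw g)) \<otimes>\<^bsub>Uf n\<^esub> s2 (q n (dl w))" by (simp only: gen Cons)
    also have "\<dots> = s2 (q n (dl (g # w)))"
      by (simp only: dl_Cons q_mult ring_hom_mult[OF h2 q_carrier q_carrier])
    finally show ?case .
  qed
  have sums: "finite S \<Longrightarrow> s1 (q n (\<Sum>w\<in>S. sc (c w) * dl w)) = s2 (q n (\<Sum>w\<in>S. sc (c w) * dl w))" for S c
  proof (induction S rule: finite_induct)
    case empty
    show ?case by (simp only: sum.empty q_zero ring_hom_zero[OF h1 ring_U ring_U] ring_hom_zero[OF h2 ring_U ring_U])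
  next
    case (insert w S)
    have "s1 (q n (\<Sum>w\<in>insert w S. sc (c w) * dl w)) =
        (s1 (q n (sc (c w))) \<otimes>\<^bsub>Uf n\<^esub> s1 (q n (dl w))) \<oplus>\<^bsub>Uf n\<^esub> s1 (q n (\<Sum>w\<in>S. sc (c w) * dl w))"
      by (simp only: sum.insert[OF insert.hyps] q_add ring_hom_add[OF h1 q_carrier q_carrier])
        (simp only: q_mult ring_hom_mult[OF h1 q_carrier q_carrier])
    also have "\<dots> = (s2 (q n (sc (c w))) \<otimes>\<^bsub>Uf n\<^esub> s2 (q n (dl w))) \<oplus>\<^bsub>Uf n\<^esub> s2 (q n (\<Sum>w\<in>S. sc (c w) * dl w))"
      by (simp only: scl dl insert.IH)
    also have "\<dots> = s2 (q n (\<Sum>w\<in>insert w S. sc (c w) * dl w))"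
      by (simp only: sum.insert[OF insert.hyps] q_add ring_hom_add[OF h2 q_carrier q_carrier])
        (simp only: q_mult ring_hom_mult[OF h2 q_carrier q_carrier])
    finally show ?case .
  qed
  obtain a where a: "X = q n a" using q_surj[OF X] by blast
  have "a = (\<Sum>w\<in>supp a. sc (Rep_fw a w) * dl w)" by (rule expand)
  then show ?thesis using sums[of "supp a" "Rep_fw a", OF finite_supp] a by simp
qed

theorem mainTheorem13:
  fixes n :: nat and x :: complex
  shows "(\<exists>\<theta>. alg_aut n \<theta> \<and> theta_prop n x \<theta>) \<and>
         (\<forall>\<theta>1 \<theta>2. alg_aut n \<theta>1 \<and> theta_prop n x \<theta>1 \<and> alg_aut n \<theta>2 \<and> theta_prop n x \<theta>2
            \<longrightarrow> (\<forall>X\<in>carrier (Uf n). \<theta>1 X = \<theta>2 X))"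
proof
  show "\<exists>\<theta>. alg_aut n \<theta> \<and> theta_prop n x \<theta>" using existence by blast
next
  show "\<forall>\<theta>1 \<theta>2. alg_aut n \<theta>1 \<and> theta_prop n x \<theta>1 \<and> alg_aut n \<theta>2 \<and> theta_prop n x \<theta>2
            \<longrightarrow> (\<forall>X\<in>carrier (Uf n). \<theta>1 X = \<theta>2 X)"
  proof (intro allI impI)
    fix s1 s2 :: "fa set \<Rightarrow> fa set"
    assume A: "alg_aut n s1 \<and> theta_prop n x s1 \<and> alg_aut n s2 \<and> theta_prop n x s2"
    interpret U: ring "Uf n" by (rule ring_U)
    have h1: "s1 \<in> ring_hom (Uf n) (Uf n)" using A by (simp add: alg_aut_def ring_iso_def)
    have h2: "s2 \<in> ring_hom (Uf n) (Uf n)" using A by (simp add: alg_aut_def ring_iso_def)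
    have scl: "\<And>c. s1 (q n (sc c)) = s2 (q n (sc c))"
      using A by (simp add: alg_aut_def cls_scal)
    have tp1: "theta_prop n x s1" and tp2: "theta_prop n x s2" using A by simp_all
    have gE: "s1 (q n (gnw E)) = s2 (q n (gnw E))"
      using tp1 tp2 unfolding theta_prop_def cls_gn by simp
    have gH: "s1 (q n (gnw H)) = s2 (q n (gnw H))"
      using tp1 tp2 unfolding theta_prop_def cls_gn by simp
    have gF: "s1 (q n (gnw F)) = s2 (q n (gnw F))"
      using tp1 tp2 unfolding theta_prop_def cls_gn by simp
    have gP: "s1 (q n (gnw (P j))) = s2 (q n (gnw (P j)))" for j
    proof (cases "j \<le> n")
      case True
      then show ?thesis using tp1 tp2 unfolding theta_prop_def cls_gn by simp
    next
      case False
      then have "pp j - 0 \<in> Jw n" using R10[of n j] by simp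
      then have "q n (pp j) = \<zero>\<^bsub>Uf n\<^esub>" by (simp only: q_eq[symmetric] q_zero)
      then show ?thesis
        by (simp only: ring_hom_zero[OF h1 ring_U ring_U] ring_hom_zero[OF h2 ring_U ring_U])
    qed
    have fg: "q n ff \<otimes>\<^bsub>Uf n\<^esub> q n gg = \<one>\<^bsub>Uf n\<^esub>"
    proof -
      have "q n (ff * gg) = q n 1" using L_fg[of n] by (simp only: q_eq_cg)
      then show ?thesis by (simp only: q_mult q_one)
    qed
    have gf: "q n gg \<otimes>\<^bsub>Uf n\<^esub> q n ff = \<one>\<^bsub>Uf n\<^esub>"
    proof -
      have "q n (gg * ff) = q n 1" using L_gf[of n] by (simp only: q_eq_cg)
      then show ?thesis by (simp only: q_mult q_one)
    qed
    have gG: "s1 (q n gg) = s2 (q n gg)"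
    proof -
      let ?F = "s2 (q n ff)"
      have F1: "s1 (q n ff) = ?F" by (rule gF)
      have c1: "s1 (q n gg) \<in> carrier (Uf n)" by (rule ring_hom_closed[OF h1 q_carrier])
      have c2: "s2 (q n gg) \<in> carrier (Uf n)" by (rule ring_hom_closed[OF h2 q_carrier])
      have cF: "?F \<in> carrier (Uf n)" by (rule ring_hom_closed[OF h2 q_carrier])
      have a: "s1 (q n gg) \<otimes>\<^bsub>Uf n\<^esub> ?F = \<one>\<^bsub>Uf n\<^esub>"
        using ring_hom_mult[OF h1 q_carrier q_carrier, of gg ff] gf ring_hom_one[OF h1] F1 by simp
      have b: "?F \<otimes>\<^bsub>Uf n\<^esub> s2 (q n gg) = \<one>\<^bsub>Uf n\<^esub>"
        using ring_hom_mult[OF h2 q_carrier q_carrier, of ff gg] fg ring_hom_one[OF h2] by simp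
      have "s1 (q n gg) = s1 (q n gg) \<otimes>\<^bsub>Uf n\<^esub> (?F \<otimes>\<^bsub>Uf n\<^esub> s2 (q n gg))"
        using b c1 by simp
      also have "\<dots> = (s1 (q n gg) \<otimes>\<^bsub>Uf n\<^esub> ?F) \<otimes>\<^bsub>Uf n\<^esub> s2 (q n gg)"
        using c1 c2 cF by (simp add: U.m_assoc)
      also have "\<dots> = s2 (q n gg)" using a c2 by simp
      finally show ?thesis .
    qed
    have gen: "\<And>g. s1 (q n (gnw g)) = s2 (q n (gnw g))"
    proof -
      fix g show "s1 (q n (gnw g)) = s2 (q n (gnw g))"
        by (cases g) (simp_all only: gE gH gF gG gP)
    qed
    show "\<forall>X\<in>carrier (Uf n). s1 X = s2 X"
      using uniq_base[OF h1 h2 gen scl] by blast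
  qed
qed

end
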